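(* Let $0<\varepsilon<1$, $T>0$, $u\in C_c^\infty(\Omega\times[0,T];\mathbb R^n)$, and let $\varphi$ (with $\nabla^j\varphi$, $j\le3$, and $\partial_t\nabla^k\varphi$, $k\le1$, continuous on $\Omega\times[0,T]$, and, if $\Omega=\mathbb R^n$, $R^k\|\varphi+1\|_{C^2((\mathbb R^n\setminus B_R)\times[0,T])}\to0$ as $R\to\infty$ for every $k$) satisfy $\partial_t\varphi+u\cdot\nabla\varphi=\Delta\varphi-W'(\varphi)/\varepsilon^2$ on $\Omega\times[0,T]$. There is a constant $c_2$ depending only on $n$ such that for all $y\in\Omega$ and $0<t<s<\infty$ with $t<T$, writing $\tilde\rho=\tilde\rho_{(y,s)}(x,t)$, $$\frac{d}{dt}\int_\Omega\tilde\rho\,d\mu^\varepsilon_t\le\frac12\int_\Omega\tilde\rho|u|^2d\mu^\varepsilon_t+\frac1{2(s-t)}\int_\Omega\xi_\varepsilon\tilde\rho\,dx+c_2e^{-\frac1{128(s-t)}}\mu^\varepsilon_t(B_{1/2}(y)).$$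
   Context: $n\ge2$, $\Omega=\mathbb T^n$ (functions $\mathbb Z^n$-periodic) or $\mathbb R^n$. $W:\mathbb R\to[0,\infty)$ is $C^3$ with $W(\pm1)=W'(\pm1)=0$ (double-well potential). $e_\varepsilon:=\frac{\varepsilon|\nabla\varphi|^2}2+\frac{W(\varphi)}\varepsilon$, $\xi_\varepsilon:=\frac{\varepsilon|\nabla\varphi|^2}2-\frac{W(\varphi)}\varepsilon$, $\mu^\varepsilon_t:=e_\varepsilon(\cdot,t)\,dx$. Fix a radially symmetric $\eta\in C_c^\infty(B_{1/2})$ with $0\le\eta\le1$, $\eta=1$ on $B_{1/4}$. For $t<s$: $\rho_{(y,s)}(x,t)=(4\pi(s-t))^{-\frac{n-1}2}e^{-\frac{|x-y|^2}{4(s-t)}}$ and $\tilde\rho_{(y,s)}(x,t)=\rho_{(y,s)}(x,t)\eta(x-y)$. *)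

theory Defs
  imports "HOL-Analysis.Analysis"
begin

definition pdx :: "'n::finite \<Rightarrow> (real^'n \<Rightarrow> real \<Rightarrow> real) \<Rightarrow> real^'n \<Rightarrow> real \<Rightarrow> real" where
  "pdx i f x t = deriv (\<lambda>h. f (x + h *\<^sub>R axis i 1) t) 0"

definition has_pdx :: "'n::finite \<Rightarrow> (real^'n \<Rightarrow> real \<Rightarrow> real) \<Rightarrow> real \<Rightarrow> bool" where
  "has_pdx i f T \<longleftrightarrow> (\<forall>x. \<forall>t\<in>{0..T}. (\<lambda>h. f (x + h *\<^sub>R axis i 1) t) differentiable (at 0))"

definition pdt :: "real \<Rightarrow> (real^'n \<Rightarrow> real \<Rightarrow> real) \<Rightarrow> real^'n \<Rightarrow> real \<Rightarrow> real" where
  "pdt T f x t = (THE D. ((\<lambda>\<tau>. f x \<tau>) has_real_derivative D) (at t within {0..T}))"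

definition has_pdt :: "real \<Rightarrow> (real^'n \<Rightarrow> real \<Rightarrow> real) \<Rightarrow> bool" where
  "has_pdt T f \<longleftrightarrow> (\<forall>x. \<forall>t\<in>{0..T}. (\<lambda>\<tau>. f x \<tau>) differentiable (at t within {0..T}))"

definition cont_Q :: "real \<Rightarrow> (real^'n \<Rightarrow> real \<Rightarrow> real) \<Rightarrow> bool" where
  "cont_Q T g \<longleftrightarrow> continuous_on (UNIV \<times> {0..T}) (\<lambda>p. g (fst p) (snd p))"

definition phase_regular :: "real \<Rightarrow> (real^'n::finite \<Rightarrow> real \<Rightarrow> real) \<Rightarrow> bool" where
  "phase_regular T \<phi> \<longleftrightarrow>
     cont_Q T \<phi> \<and>
     (\<forall>i. has_pdx i \<phi> T \<and> cont_Q T (pdx i \<phi>)) \<and>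
     (\<forall>i j. has_pdx j (pdx i \<phi>) T \<and> cont_Q T (pdx j (pdx i \<phi>))) \<and>
     (\<forall>i j k. has_pdx k (pdx j (pdx i \<phi>)) T \<and> cont_Q T (pdx k (pdx j (pdx i \<phi>)))) \<and>
     has_pdt T \<phi> \<and> cont_Q T (pdt T \<phi>) \<and>
     (\<forall>i. has_pdt T (pdx i \<phi>) \<and> cont_Q T (pdt T (pdx i \<phi>)))"

definition dirpd :: "'a::euclidean_space \<Rightarrow> ('a \<Rightarrow> real) \<Rightarrow> 'a \<Rightarrow> real" where
  "dirpd v f z = deriv (\<lambda>h. f (z + h *\<^sub>R v)) 0"

definition smooth_fun :: "('a::euclidean_space \<Rightarrow> real) \<Rightarrow> bool" where
  "smooth_fun f \<longleftrightarrow> (\<forall>vs. set vs \<subseteq> Basis \<longrightarrow>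
      continuous_on UNIV (foldr dirpd vs f) \<and>
      (\<forall>v\<in>Basis. \<forall>z. (\<lambda>h. foldr dirpd vs f (z + h *\<^sub>R v)) differentiable (at 0)))"

definition zn_periodic :: "(real^'n::finite \<Rightarrow> real \<Rightarrow> 'b) \<Rightarrow> bool" where
  "zn_periodic f \<longleftrightarrow> (\<forall>(k::'n \<Rightarrow> int) x t. f (x + (\<chi> i. real_of_int (k i))) t = f x t)"

definition decays_to_minus_one :: "real \<Rightarrow> (real^'n::finite \<Rightarrow> real \<Rightarrow> real) \<Rightarrow> bool" where
  "decays_to_minus_one T \<phi> \<longleftrightarrow> (\<forall>k::nat. \<forall>e>0. \<exists>R0. \<forall>R\<ge>R0. \<forall>x. \<forall>t\<in>{0..T}. norm x \<ge> R \<longrightarrow>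
      R ^ k * (\<bar>\<phi> x t + 1\<bar> + (\<Sum>i\<in>UNIV. \<bar>pdx i \<phi> x t\<bar>)
               + (\<Sum>i\<in>UNIV. \<Sum>j\<in>UNIV. \<bar>pdx j (pdx i \<phi>) x t\<bar>)) \<le> e)"

definition e_eps :: "(real \<Rightarrow> real) \<Rightarrow> real \<Rightarrow> (real^'n::finite \<Rightarrow> real \<Rightarrow> real) \<Rightarrow> real^'n \<Rightarrow> real \<Rightarrow> real" where
  "e_eps W \<epsilon> \<phi> x t = \<epsilon> * (\<Sum>i\<in>UNIV. (pdx i \<phi> x t)\<^sup>2) / 2 + W (\<phi> x t) / \<epsilon>"

definition xi_eps :: "(real \<Rightarrow> real) \<Rightarrow> real \<Rightarrow> (real^'n::finite \<Rightarrow> real \<Rightarrow> real) \<Rightarrow> real^'n \<Rightarrow> real \<Rightarrow> real" where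
  "xi_eps W \<epsilon> \<phi> x t = \<epsilon> * (\<Sum>i\<in>UNIV. (pdx i \<phi> x t)\<^sup>2) / 2 - W (\<phi> x t) / \<epsilon>"

definition rho_heat :: "real^'n::finite \<Rightarrow> real \<Rightarrow> real^'n \<Rightarrow> real \<Rightarrow> real" where
  "rho_heat y s x t = (4 * pi * (s - t)) powr (- (real CARD('n) - 1) / 2)
       * exp (- (norm (x - y))\<^sup>2 / (4 * (s - t)))"

definition rho_tilde :: "(real^'n::finite \<Rightarrow> real) \<Rightarrow> real^'n \<Rightarrow> real \<Rightarrow> real^'n \<Rightarrow> real \<Rightarrow> real" where
  "rho_tilde \<eta> y s x t = rho_heat y s x t * \<eta> (x - y)"

end

theory Submission
  imports Defs
begin


definition hpd :: "'a::real_normed_vector \<Rightarrow> ('a \<Rightarrow> real) \<Rightarrow> ('a \<Rightarrow> real) \<Rightarrow> bool" where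
  "hpd v F F' \<longleftrightarrow> (\<forall>x. ((\<lambda>h. F (x + h *\<^sub>R v)) has_real_derivative F' x) (at 0))"

lemma hpd_line:
  assumes "hpd v F F'"
  shows "((\<lambda>h. F (x + h *\<^sub>R v)) has_real_derivative F' (x + h0 *\<^sub>R v)) (at h0)"
proof -
  have "((\<lambda>k. F ((x + h0 *\<^sub>R v) + k *\<^sub>R v)) has_real_derivative F' (x + h0 *\<^sub>R v)) (at 0)"
    using assms unfolding hpd_def by blast
  hence "((\<lambda>k. F ((x + h0 *\<^sub>R v) + k *\<^sub>R v)) has_real_derivative F' (x + h0 *\<^sub>R v)) (at (h0 + (-h0)))"
    by simp
  hence "((\<lambda>h. F ((x + h0 *\<^sub>R v) + (h + - h0) *\<^sub>R v)) has_real_derivative F' (x + h0 *\<^sub>R v)) (at h0)"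
    by (subst (asm) DERIV_shift)
  moreover have "(\<lambda>h. F ((x + h0 *\<^sub>R v) + (h + - h0) *\<^sub>R v)) = (\<lambda>h. F (x + h *\<^sub>R v))"
    by (rule ext) (simp add: algebra_simps)
  ultimately show ?thesis by simp
qed

lemma hpd_dirpd:
  fixes F :: "'a::euclidean_space \<Rightarrow> real"
  assumes "hpd v F F'" shows "dirpd v F x = F' x"
  using assms unfolding hpd_def dirpd_def by (simp add: DERIV_imp_deriv)

lemma hpd_of_differentiable:
  fixes F :: "'a::euclidean_space \<Rightarrow> real"
  assumes "\<forall>x. (\<lambda>h. F (x + h *\<^sub>R v)) differentiable (at 0)"
  shows "hpd v F (dirpd v F)"
  unfolding hpd_def dirpd_def
  using assms by (simp add: DERIV_deriv_iff_real_differentiable)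

lemma hpd_const: "hpd v (\<lambda>x. c) (\<lambda>x. 0)"
  unfolding hpd_def by simp

lemma hpd_add: "hpd v F F' \<Longrightarrow> hpd v G G' \<Longrightarrow> hpd v (\<lambda>x. F x + G x) (\<lambda>x. F' x + G' x)"
  unfolding hpd_def by (auto intro!: derivative_intros)

lemma hpd_diff: "hpd v F F' \<Longrightarrow> hpd v G G' \<Longrightarrow> hpd v (\<lambda>x. F x - G x) (\<lambda>x. F' x - G' x)"
  unfolding hpd_def by (auto intro!: derivative_intros)

lemma hpd_mult: "hpd v F F' \<Longrightarrow> hpd v G G' \<Longrightarrow> hpd v (\<lambda>x. F x * G x) (\<lambda>x. F' x * G x + F x * G' x)"
  unfolding hpd_def by (auto intro!: derivative_eq_intros)

lemma hpd_cmult: "hpd v F F' \<Longrightarrow> hpd v (\<lambda>x. c * F x) (\<lambda>x. c * F' x)"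
  unfolding hpd_def by (auto intro!: derivative_eq_intros)

lemma hpd_sum: "(\<And>i. i \<in> I \<Longrightarrow> hpd v (F i) (F' i)) \<Longrightarrow> hpd v (\<lambda>x. \<Sum>i\<in>I. F i x) (\<lambda>x. \<Sum>i\<in>I. F' i x)"
  unfolding hpd_def by (auto intro!: derivative_eq_intros DERIV_sum)

lemma hpd_comp:
  assumes "hpd v F F'" "\<And>z. (g has_real_derivative g' z) (at z)"
  shows "hpd v (\<lambda>x. g (F x)) (\<lambda>x. g' (F x) * F' x)"
  unfolding hpd_def
proof
  fix x
  have "((\<lambda>h. F (x + h *\<^sub>R v)) has_real_derivative F' x) (at 0)" using assms(1) unfolding hpd_def by blast
  moreover have "(g has_real_derivative g' (F (x + 0 *\<^sub>R v))) (at (F (x + 0 *\<^sub>R v)))" using assms(2) by blast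
  ultimately have "((\<lambda>h. g (F (x + h *\<^sub>R v))) has_real_derivative g' (F (x + 0 *\<^sub>R v)) * F' x) (at 0)"
    using DERIV_chain2[of g "g' (F (x + 0 *\<^sub>R v))" "\<lambda>h. F (x + h *\<^sub>R v)" 0] by simp
  thus "((\<lambda>h. g (F (x + h *\<^sub>R v))) has_real_derivative g' (F x) * F' x) (at 0)" by simp
qed

lemma hpd_cong: "hpd v F F' \<Longrightarrow> (\<And>x. F' x = G' x) \<Longrightarrow> hpd v F G'"
  by (metis ext)

lemma hpd_zero_open:
  assumes "hpd v F F'" "open U" "\<forall>z\<in>U. F z = c" "x \<in> U"
  shows "F' x = 0"
proof -
  have d: "((\<lambda>h. F (x + h *\<^sub>R v)) has_real_derivative F' x) (at 0)" using assms(1) unfolding hpd_def by blast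
  have "continuous_on UNIV (\<lambda>h::real. x + h *\<^sub>R v)" by (intro continuous_intros)
  hence "open ((\<lambda>h::real. x + h *\<^sub>R v) -` U)"
    using assms(2) open_vimage by blast
  moreover have "0 \<in> (\<lambda>h::real. x + h *\<^sub>R v) -` U" using assms(4) by simp
  ultimately obtain e where e: "e > 0" "ball 0 e \<subseteq> (\<lambda>h::real. x + h *\<^sub>R v) -` U"
    using open_contains_ball by blast
  have "((\<lambda>h. c) has_real_derivative F' x) (at 0)"
  proof (rule has_field_derivative_transform_within_open[OF d, of "ball 0 e"])
    show "open (ball (0::real) e)" by simp
    show "(0::real) \<in> ball 0 e" using e by simp
    show "\<And>h. h \<in> ball 0 e \<Longrightarrow> F (x + h *\<^sub>R v) = c" using e assms(3) by auto
  qed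
  moreover have "((\<lambda>h::real. c) has_real_derivative 0) (at 0)" by simp
  ultimately show ?thesis using DERIV_unique by blast
qed

lemma pdx_dirpd: "pdx i f x t = dirpd (axis i 1) (\<lambda>z. f z t) x"
  unfolding pdx_def dirpd_def by simp

lemma has_pdx_hpd:
  assumes "has_pdx i f T" "t \<in> {0..T}"
  shows "hpd (axis i 1) (\<lambda>z. f z t) (\<lambda>z. pdx i f z t)"
proof -
  have "hpd (axis i 1) (\<lambda>z. f z t) (dirpd (axis i 1) (\<lambda>z. f z t))"
    using assms by (intro hpd_of_differentiable) (auto simp: has_pdx_def)
  thus ?thesis by (simp add: pdx_dirpd[abs_def])
qed

lemma has_pdt_deriv:
  assumes "has_pdt T f" "0 < t" "t < T"
  shows "((\<lambda>\<tau>. f x \<tau>) has_real_derivative pdt T f x t) (at t)"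
proof -
  have w: "at t within {0..T} = at t" using assms by (simp add: at_within_Icc_at)
  have "(\<lambda>\<tau>. f x \<tau>) differentiable (at t)" using assms w unfolding has_pdt_def by (metis atLeastAtMost_iff less_eq_real_def)
  then obtain D where D: "((\<lambda>\<tau>. f x \<tau>) has_real_derivative D) (at t)"
    using real_differentiable_def by blast
  have "pdt T f x t = D" unfolding pdt_def w
    using D DERIV_unique by blast
  thus ?thesis using D by simp
qed


lemma mixed_mvt:
  fixes F :: "'a::real_normed_vector \<Rightarrow> real"
  assumes hv: "hpd v F Fv" and hvw: "hpd w Fv Fvw" and h: "h > 0"
  shows "\<exists>P. norm (P - x) \<le> h * (norm v + norm w) \<and>
     F (x + h *\<^sub>R v + h *\<^sub>R w) - F (x + h *\<^sub>R v) - F (x + h *\<^sub>R w) + F x = h * h * Fvw P"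
proof -
  define g where "g a = F ((x + h *\<^sub>R w) + a *\<^sub>R v) - F (x + a *\<^sub>R v)" for a
  define g' where "g' a = Fv ((x + h *\<^sub>R w) + a *\<^sub>R v) - Fv (x + a *\<^sub>R v)" for a
  have "\<And>a. 0 \<le> a \<Longrightarrow> a \<le> h \<Longrightarrow> DERIV g a :> g' a"
    unfolding g_def g'_def
    using hpd_line[OF hv, of "x + h *\<^sub>R w"] hpd_line[OF hv, of x]
    by (auto intro!: derivative_intros)
  from MVT2[OF h this] obtain \<xi> where xi: "0 < \<xi>" "\<xi> < h" "g h - g 0 = (h - 0) * g' \<xi>" by blast
  define k where "k b = Fv ((x + \<xi> *\<^sub>R v) + b *\<^sub>R w)" for b
  have "\<And>b. 0 \<le> b \<Longrightarrow> b \<le> h \<Longrightarrow> DERIV k b :> Fvw ((x + \<xi> *\<^sub>R v) + b *\<^sub>R w)"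
    unfolding k_def using hpd_line[OF hvw, of "x + \<xi> *\<^sub>R v"] by auto
  from MVT2[OF h this] obtain \<eta> where eta: "0 < \<eta>" "\<eta> < h"
    "k h - k 0 = (h - 0) * Fvw ((x + \<xi> *\<^sub>R v) + \<eta> *\<^sub>R w)" by blast
  have gk: "g' \<xi> = k h - k 0" unfolding g'_def k_def by (simp add: algebra_simps)
  have "g h - g 0 = F (x + h *\<^sub>R v + h *\<^sub>R w) - F (x + h *\<^sub>R v) - F (x + h *\<^sub>R w) + F x"
    unfolding g_def by (simp add: algebra_simps)
  moreover have "norm ((x + \<xi> *\<^sub>R v + \<eta> *\<^sub>R w) - x) \<le> h * (norm v + norm w)"
  proof -
    have "norm ((x + \<xi> *\<^sub>R v + \<eta> *\<^sub>R w) - x) \<le> norm (\<xi> *\<^sub>R v) + norm (\<eta> *\<^sub>R w)"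
      by (metis add_diff_cancel_left' add.assoc norm_triangle_ineq)
    also have "\<dots> = \<xi> * norm v + \<eta> * norm w" using xi eta by simp
    also have "\<dots> \<le> h * norm v + h * norm w"
      using xi eta by (intro add_mono mult_right_mono) auto
    finally show ?thesis by (simp add: algebra_simps)
  qed
  ultimately show ?thesis using xi(3) gk eta(3) by (metis diff_zero mult.assoc)
qed

lemma schwarz:
  fixes F :: "'a::real_normed_vector \<Rightarrow> real"
  assumes hv: "hpd v F Fv" and hw: "hpd w F Fw" and hvw: "hpd w Fv Fvw" and hwv: "hpd v Fw Fwv"
    and c1: "continuous_on UNIV Fvw" and c2: "continuous_on UNIV Fwv"
  shows "Fvw x = Fwv x"
proof (rule ccontr)
  assume ne: "Fvw x \<noteq> Fwv x"
  define d where "d = \<bar>Fvw x - Fwv x\<bar>"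
  have d: "d > 0" using ne d_def by simp
  have "continuous (at x) Fvw" using c1 by (simp add: continuous_on_eq_continuous_at)
  then obtain d1 where d1: "d1 > 0" "\<forall>y. dist y x < d1 \<longrightarrow> dist (Fvw y) (Fvw x) < d/2"
    using d unfolding continuous_at_eps_delta by (meson half_gt_zero)
  have "continuous (at x) Fwv" using c2 by (simp add: continuous_on_eq_continuous_at)
  then obtain d2 where d2: "d2 > 0" "\<forall>y. dist y x < d2 \<longrightarrow> dist (Fwv y) (Fwv x) < d/2"
    using d unfolding continuous_at_eps_delta by (meson half_gt_zero)
  define h where "h = min d1 d2 / (2 * (norm v + norm w + 1))"
  have den: "2 * (norm v + norm w + 1) > 0" by (smt (verit) norm_ge_zero)
  hence hpos: "h > 0" unfolding h_def using d1 d2 by (simp add: divide_pos_pos)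
  have hsmall: "h * (norm v + norm w) < min d1 d2"
  proof -
    have "h * (norm v + norm w) \<le> h * (norm v + norm w + 1)" using hpos by simp
    also have "\<dots> = min d1 d2 / 2" unfolding h_def using den by (simp add: field_simps)
    also have "\<dots> < min d1 d2" using d1(1) d2(1) by (simp add: min_def)
    finally show ?thesis .
  qed
  obtain P1 where P1: "norm (P1 - x) \<le> h * (norm v + norm w)"
    "F (x + h *\<^sub>R v + h *\<^sub>R w) - F (x + h *\<^sub>R v) - F (x + h *\<^sub>R w) + F x = h * h * Fvw P1"
    using mixed_mvt[OF hv hvw hpos] by blast
  obtain P2 where P2: "norm (P2 - x) \<le> h * (norm w + norm v)"
    "F (x + h *\<^sub>R w + h *\<^sub>R v) - F (x + h *\<^sub>R w) - F (x + h *\<^sub>R v) + F x = h * h * Fwv P2"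
    using mixed_mvt[OF hw hwv hpos] by blast
  have "h * h * Fvw P1 = h * h * Fwv P2" using P1(2) P2(2) by (simp add: algebra_simps)
  hence eq: "Fvw P1 = Fwv P2" using hpos by simp
  have "dist P1 x < d1" using P1(1) hsmall by (simp add: dist_norm)
  hence a: "\<bar>Fvw P1 - Fvw x\<bar> < d/2" using d1 by (simp add: dist_real_def)
  have "dist P2 x < d2" using P2(1) hsmall by (simp add: dist_norm algebra_simps)
  hence b: "\<bar>Fwv P2 - Fwv x\<bar> < d/2" using d2 by (simp add: dist_real_def)
  have a': "\<bar>Fwv P2 - Fvw x\<bar> < d/2" using a eq by simp
  have "\<bar>Fvw x - Fwv x\<bar> \<le> \<bar>Fwv P2 - Fvw x\<bar> + \<bar>Fwv P2 - Fwv x\<bar>" by linarith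
  hence "d \<le> \<bar>Fwv P2 - Fvw x\<bar> + \<bar>Fwv P2 - Fwv x\<bar>" unfolding d_def .
  also have "\<dots> < d/2 + d/2" using a' b by (rule add_strict_mono)
  finally have "d < d" by simp
  thus False by simp
qed


lemma integrable_cs:
  fixes f :: "'a::euclidean_space \<Rightarrow> real"
  assumes "continuous_on UNIV f" "\<And>x. x \<notin> cball c r \<Longrightarrow> f x = 0"
  shows "integrable lborel f"
proof -
  have "integrable lborel (\<lambda>x. indicator (cball c r) x *\<^sub>R f x)"
    by (rule borel_integrable_compact) (auto intro: continuous_on_subset[OF assms(1)])
  moreover have "(\<lambda>x. indicator (cball c r) x *\<^sub>R f x) = f"
    using assms(2) by (intro ext) (auto simp: indicator_def)
  ultimately show ?thesis by simp
qed

lemma lborel_eq_box: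
  fixes f :: "'a::euclidean_space \<Rightarrow> real"
  assumes "continuous_on UNIV f" "\<And>x. x \<notin> cball c r \<Longrightarrow> f x = 0" "cball c r \<subseteq> cbox a b"
  shows "(\<integral>x. f x \<partial>lborel) = integral (cbox a b) f"
proof -
  have "(\<integral>x. f x \<partial>lborel) = integral UNIV f"
    using integral_lborel[OF integrable_cs[OF assms(1,2)]] by simp
  also have "\<dots> = integral UNIV (\<lambda>x. if x \<in> cbox a b then f x else 0)"
  proof (intro arg_cong[where f="integral UNIV"] ext)
    fix x
    show "f x = (if x \<in> cbox a b then f x else 0)"
    proof (cases "x \<in> cbox a b")
      case False
      hence "x \<notin> cball c r" using assms(3) by blast
      thus ?thesis using assms(2) False by simp
    qed simp
  qed
  also have "\<dots> = integral (cbox a b) f" by (rule integral_restrict_UNIV)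
  finally show ?thesis .
qed

lemma deriv_zero_near:
  assumes "((\<lambda>\<tau>. g \<tau>) has_real_derivative D) (at t0)" "open S" "t0 \<in> S" "\<And>\<tau>. \<tau> \<in> S \<Longrightarrow> g \<tau> = 0"
  shows "D = 0"
proof -
  have "((\<lambda>\<tau>. 0::real) has_real_derivative D) (at t0)"
    by (rule has_field_derivative_transform_within_open[OF assms(1) assms(2,3)]) (use assms(4) in auto)
  thus ?thesis using DERIV_unique DERIV_const by blast
qed

lemma DUI:
  fixes g g' :: "real \<Rightarrow> 'a::euclidean_space \<Rightarrow> real"
  assumes d: "\<delta> > 0"
    and supp: "\<And>\<tau> x. \<tau> \<in> ball t0 \<delta> \<Longrightarrow> x \<notin> cball c r \<Longrightarrow> g \<tau> x = 0"
    and der: "\<And>\<tau> x. \<tau> \<in> ball t0 \<delta> \<Longrightarrow> ((\<lambda>\<tau>. g \<tau> x) has_real_derivative g' \<tau> x) (at \<tau>)"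
    and cg': "continuous_on (ball t0 \<delta> \<times> UNIV) (\<lambda>(\<tau>,x). g' \<tau> x)"
    and cg: "\<And>\<tau>. \<tau> \<in> ball t0 \<delta> \<Longrightarrow> continuous_on UNIV (g \<tau>)"
  shows "((\<lambda>\<tau>. \<integral>x. g \<tau> x \<partial>lborel) has_real_derivative (\<integral>x. g' t0 x \<partial>lborel)) (at t0)"
proof -
  obtain a where box: "cball c r \<subseteq> cbox (-a) a"
    using bounded_subset_cbox_symmetric[OF bounded_cball] by blast
  have t0: "t0 \<in> ball t0 \<delta>" using d by simp
  have cg't0: "continuous_on UNIV (g' t0)"
  proof -
    have "continuous_on UNIV (\<lambda>x. (\<lambda>(\<tau>,x). g' \<tau> x) (t0, x))"
      by (rule continuous_on_compose2[OF cg']) (use d in \<open>auto intro!: continuous_intros\<close>)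
    thus ?thesis by simp
  qed
  have supp': "g' t0 x = 0" if "x \<notin> cball c r" for x
    by (rule deriv_zero_near[OF der[OF t0], of "ball t0 \<delta>"]) (use that supp d in auto)
  have L: "((\<lambda>\<tau>. integral (cbox (-a) a) (g \<tau>)) has_real_derivative integral (cbox (-a) a) (g' t0))
      (at t0 within ball t0 \<delta>)"
  proof (rule leibniz_rule_field_derivative)
    show "\<And>x t. x \<in> ball t0 \<delta> \<Longrightarrow> t \<in> cbox (- a) a \<Longrightarrow>
         ((\<lambda>x. g x t) has_field_derivative g' x t) (at x within ball t0 \<delta>)"
      using der has_field_derivative_at_within by blast
    show "\<And>x. x \<in> ball t0 \<delta> \<Longrightarrow> g x integrable_on cbox (- a) a"
      using cg by (meson integrable_continuous continuous_on_subset subset_UNIV)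
    show "continuous_on (ball t0 \<delta> \<times> cbox (- a) a) (\<lambda>(x, t). g' x t)"
      by (rule continuous_on_subset[OF cg']) auto
  qed (use t0 in auto)
  hence L': "((\<lambda>\<tau>. integral (cbox (-a) a) (g \<tau>)) has_real_derivative integral (cbox (-a) a) (g' t0)) (at t0)"
    using at_within_open[OF t0 open_ball] by simp
  have "((\<lambda>\<tau>. \<integral>x. g \<tau> x \<partial>lborel) has_real_derivative integral (cbox (-a) a) (g' t0)) (at t0)"
  proof (rule has_field_derivative_transform_within_open[OF L' open_ball t0])
    fix \<tau> assume "\<tau> \<in> ball t0 \<delta>"
    thus "integral (cbox (- a) a) (g \<tau>) = (\<integral>x. g \<tau> x \<partial>lborel)"
      using lborel_eq_box[OF cg[of \<tau>] supp[of \<tau>] box] by simp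
  qed
  moreover have "integral (cbox (-a) a) (g' t0) = (\<integral>x. g' t0 x \<partial>lborel)"
    using lborel_eq_box[OF cg't0 supp' box] by simp
  ultimately show ?thesis by simp
qed


lemma integral_translate:
  fixes H :: "'a::euclidean_space \<Rightarrow> real"
  assumes "continuous_on UNIV H"
  shows "(\<integral>x. H (x + w) \<partial>lborel) = (\<integral>x. H x \<partial>lborel)"
proof -
  have m: "H \<in> borel_measurable borel" using assms by (intro borel_measurable_continuous_onI)
  have "(\<integral>x. H x \<partial>lborel) = (\<integral>x. H x \<partial>(distr lborel borel ((+) w)))"
    by (simp add: lborel_distr_plus)
  also have "\<dots> = (\<integral>x. H (w + x) \<partial>lborel)"
    by (rule integral_distr) (use m in auto)
  finally show ?thesis by (simp add: add.commute)
qed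

lemma ibp0:
  fixes H H' :: "'a::euclidean_space \<Rightarrow> real"
  assumes hH: "hpd v H H'" and cH: "continuous_on UNIV H" and cH': "continuous_on UNIV H'"
    and supp: "\<And>x. x \<notin> cball c r \<Longrightarrow> H x = 0"
  shows "(\<integral>x. H' x \<partial>lborel) = 0"
proof -
  define g where "g s x = H (x + s *\<^sub>R v)" for s x
  define g' where "g' s x = H' (x + s *\<^sub>R v)" for s x
  have D: "((\<lambda>s. \<integral>x. g s x \<partial>lborel) has_real_derivative (\<integral>x. g' 0 x \<partial>lborel)) (at 0)"
  proof (rule DUI[where \<delta>=1 and c=c and r="r + norm v"])
    fix s x assume s: "s \<in> ball (0::real) 1" and x: "x \<notin> cball c (r + norm v)"
    have "norm (s *\<^sub>R v) \<le> norm v" using s by (simp add: mult_left_le_one_le)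
    have "dist c x \<le> dist c (x + s *\<^sub>R v) + dist (x + s *\<^sub>R v) x" by (rule dist_triangle)
    also have "dist (x + s *\<^sub>R v) x = norm (s *\<^sub>R v)" by (simp add: dist_norm)
    finally have "dist c (x + s *\<^sub>R v) \<ge> dist c x - norm v" using \<open>norm (s *\<^sub>R v) \<le> norm v\<close> by linarith
    moreover have "dist c x > r + norm v" using x by simp
    ultimately have "dist c (x + s *\<^sub>R v) > r" by linarith
    thus "g s x = 0" unfolding g_def using supp by simp
  next
    fix s x
    show "((\<lambda>s. g s x) has_real_derivative g' s x) (at s)"
      unfolding g_def g'_def by (rule hpd_line[OF hH])
  next
    show "continuous_on (ball 0 1 \<times> UNIV) (\<lambda>(s, x). g' s x)"
    proof -
      have "continuous_on UNIV (\<lambda>p::real\<times>'a. H' (snd p + fst p *\<^sub>R v))"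
        by (rule continuous_on_compose2[OF cH']) (auto intro!: continuous_intros)
      hence "continuous_on (ball 0 1 \<times> UNIV) (\<lambda>p::real\<times>'a. H' (snd p + fst p *\<^sub>R v))"
        by (rule continuous_on_subset) auto
      thus ?thesis unfolding g'_def split_beta .
    qed
  next
    fix s :: real
    show "continuous_on UNIV (g s)" unfolding g_def
      by (rule continuous_on_compose2[OF cH]) (auto intro!: continuous_intros)
  qed simp
  have "(\<lambda>s. \<integral>x. g s x \<partial>lborel) = (\<lambda>s. \<integral>x. H x \<partial>lborel)"
    unfolding g_def using integral_translate[OF cH] by simp
  with D have "((\<lambda>s. \<integral>x. H x \<partial>lborel) has_real_derivative (\<integral>x. H' x \<partial>lborel)) (at 0)"
    by (simp add: g'_def)
  thus ?thesis using DERIV_unique DERIV_const by blast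
qed

lemma hpd_zero_outside:
  assumes "hpd v F F'" "\<And>x. x \<notin> cball c r \<Longrightarrow> F x = 0" "x \<notin> cball c r"
  shows "F' x = 0"
  by (rule hpd_zero_open[OF assms(1), of "- cball c r" 0]) (use assms in auto)

lemma ibp:
  fixes F G :: "'a::euclidean_space \<Rightarrow> real"
  assumes hF: "hpd v F F'" and hG: "hpd v G G'"
    and cF: "continuous_on UNIV F" and cF': "continuous_on UNIV F'"
    and cG: "continuous_on UNIV G" and cG': "continuous_on UNIV G'"
    and supp: "\<And>x. x \<notin> cball c r \<Longrightarrow> F x = 0"
  shows "(\<integral>x. F' x * G x \<partial>lborel) = - (\<integral>x. F x * G' x \<partial>lborel)"
proof -
  have supp': "F' x = 0" if "x \<notin> cball c r" for x using hpd_zero_outside[OF hF supp that] .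
  have i1: "integrable lborel (\<lambda>x. F' x * G x)"
    by (rule integrable_cs[of _ c r]) (use supp' continuous_on_mult[OF cF' cG] in auto)
  have i2: "integrable lborel (\<lambda>x. F x * G' x)"
    by (rule integrable_cs[of _ c r]) (use supp continuous_on_mult[OF cF cG'] in auto)
  have "(\<integral>x. F' x * G x + F x * G' x \<partial>lborel) = 0"
    by (rule ibp0[OF hpd_mult[OF hF hG], of c r])
       (use supp continuous_on_mult[OF cF cG] continuous_on_add[OF continuous_on_mult[OF cF' cG] continuous_on_mult[OF cF cG']] in auto)
  thus ?thesis using Bochner_Integration.integral_add[OF i1 i2] by simp
qed


lemma norm_sq_line:
  fixes z :: "real^'n::finite"
  shows "(norm (z + h *\<^sub>R axis i 1))\<^sup>2 = (norm z)\<^sup>2 + 2 * h * (z $ i) + h\<^sup>2"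
proof -
  have "(norm (z + h *\<^sub>R axis i 1))\<^sup>2 = (z + h *\<^sub>R axis i 1) \<bullet> (z + h *\<^sub>R axis i 1)"
    by (rule power2_norm_eq_inner)
  also have "\<dots> = z \<bullet> z + 2 * h * (z \<bullet> axis i 1) + h * h * (axis i 1 \<bullet> axis i (1::real))"
    by (simp add: inner_add_left inner_add_right inner_commute algebra_simps)
  also have "\<dots> = (norm z)\<^sup>2 + 2 * h * (z $ i) + h\<^sup>2"
    by (simp add: power2_norm_eq_inner inner_axis power2_eq_square[of h])
  finally show ?thesis .
qed

lemma rho_heat_hpd:
  fixes y :: "real^'n::finite"
  assumes st: "s \<noteq> t"
  shows "hpd (axis i 1) (\<lambda>x. rho_heat y s x t) (\<lambda>x. - rho_heat y s x t * ((x - y) $ i) / (2 * (s - t)))"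
  unfolding hpd_def
proof
  fix x :: "real^'n"
  define A where "A = (4 * pi * (s - t)) powr (- (real CARD('n) - 1) / 2)"
  define z where "z = x - y"
  have eq: "(\<lambda>h. rho_heat y s (x + h *\<^sub>R axis i 1) t) =
      (\<lambda>h. A * exp (- ((norm z)\<^sup>2 + 2 * h * (z $ i) + h\<^sup>2) / (4 * (s - t))))"
    unfolding rho_heat_def A_def z_def
    by (rule ext) (metis (no_types, lifting) add_diff_eq diff_add_eq norm_sq_line)
  have "((\<lambda>h. A * exp (- ((norm z)\<^sup>2 + 2 * h * (z $ i) + h\<^sup>2) / (4 * (s - t)))) has_real_derivative
      A * exp (- ((norm z)\<^sup>2 + 2 * 0 * (z $ i) + 0\<^sup>2) / (4 * (s - t))) *
        (- (2 * (z $ i) + 2 * 0) / (4 * (s - t)))) (at 0)"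
    using st by (auto intro!: derivative_eq_intros)
  hence "((\<lambda>h. A * exp (- ((norm z)\<^sup>2 + 2 * h * (z $ i) + h\<^sup>2) / (4 * (s - t)))) has_real_derivative
      - (A * exp (- (norm z)\<^sup>2 / (4 * (s - t)))) * (z $ i) / (2 * (s - t))) (at 0)"
    by (rule DERIV_cong) (use st in \<open>simp add: field_simps\<close>)
  thus "((\<lambda>h. rho_heat y s (x + h *\<^sub>R axis i 1) t) has_real_derivative
      - rho_heat y s x t * ((x - y) $ i) / (2 * (s - t))) (at 0)"
    unfolding eq by (simp add: rho_heat_def A_def z_def)
qed


definition drho :: "real^'n::finite \<Rightarrow> real \<Rightarrow> real \<Rightarrow> 'n \<Rightarrow> real^'n \<Rightarrow> real" where
  "drho y s t i x = - rho_heat y s x t * ((x - y) $ i) / (2 * (s - t))"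

definition ddrho :: "real^'n::finite \<Rightarrow> real \<Rightarrow> real \<Rightarrow> 'n \<Rightarrow> 'n \<Rightarrow> real^'n \<Rightarrow> real" where
  "ddrho y s t i j x = rho_heat y s x t * (((x - y) $ i) * ((x - y) $ j) / (4 * (s - t)\<^sup>2)
      - (if i = j then 1 else 0) / (2 * (s - t)))"

lemma rho_hpd: "s \<noteq> t \<Longrightarrow> hpd (axis i 1) (\<lambda>x. rho_heat y s x t) (drho y s t i)"
  using rho_heat_hpd[where s=s and t=t and y=y and i=i] unfolding drho_def[abs_def] by simp

lemma coord_hpd:
  fixes y :: "real^'n::finite"
  shows "hpd (axis j 1) (\<lambda>x. (x - y) $ i) (\<lambda>x. if i = j then 1 else 0)"
  unfolding hpd_def
proof
  fix x :: "real^'n"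
  have "(\<lambda>h. (x + h *\<^sub>R axis j 1 - y) $ i) = (\<lambda>h. (x - y) $ i + h * (if i = j then 1 else 0))"
    by (rule ext) (simp add: axis_def)
  moreover have "((\<lambda>h. (x - y) $ i + h * (if i = j then 1 else 0)) has_real_derivative (if i = j then 1 else 0)) (at 0)"
    by (auto intro!: derivative_eq_intros)
  ultimately show "((\<lambda>h. (x + h *\<^sub>R axis j 1 - y) $ i) has_real_derivative (if i = j then 1 else 0)) (at 0)"
    by simp
qed

lemma drho_hpd:
  assumes st: "s \<noteq> t"
  shows "hpd (axis j 1) (drho y s t i) (ddrho y s t i j)"
proof -
  have h1: "hpd (axis j 1) (\<lambda>x. (- 1 / (2 * (s - t))) * (x - y) $ i) (\<lambda>x. (- 1 / (2 * (s - t))) * (if i = j then 1 else 0))"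
    by (rule hpd_cmult[OF coord_hpd])
  have "hpd (axis j 1) (\<lambda>x. rho_heat y s x t * ((- 1 / (2 * (s - t))) * (x - y) $ i))
     (\<lambda>x. drho y s t j x * ((- 1 / (2 * (s - t))) * (x - y) $ i) + rho_heat y s x t * ((- 1 / (2 * (s - t))) * (if i = j then 1 else 0)))"
    by (rule hpd_mult[OF rho_hpd[OF st] h1])
  moreover have "(\<lambda>x. rho_heat y s x t * ((- 1 / (2 * (s - t))) * (x - y) $ i)) = drho y s t i"
    unfolding drho_def by (rule ext) simp
  moreover have "(\<lambda>x. drho y s t j x * ((- 1 / (2 * (s - t))) * (x - y) $ i) + rho_heat y s x t * ((- 1 / (2 * (s - t))) * (if i = j then 1 else 0)))
     = ddrho y s t i j"
    unfolding drho_def ddrho_def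
  proof (intro ext)
    fix x
    have u: "s - t \<noteq> 0" using st by simp
    have alg: "(- r * b / (2 * u)) * ((- 1 / (2 * u)) * a) + r * ((- 1 / (2 * u)) * d) = r * (a * b / (4 * u\<^sup>2) - d / (2 * u))"
      if "u \<noteq> 0" for r a b d u :: real using that by (simp add: field_simps power2_eq_square)
    show "- rho_heat y s x t * (x - y) $ j / (2 * (s - t)) * (- 1 / (2 * (s - t)) * (x - y) $ i) +
          rho_heat y s x t * (- 1 / (2 * (s - t)) * (if i = j then 1 else 0)) =
          rho_heat y s x t * ((x - y) $ i * (x - y) $ j / (4 * (s - t)\<^sup>2) - (if i = j then 1 else 0) / (2 * (s - t)))"
      using alg[OF u, of "rho_heat y s x t" "(x - y) $ j" "(x - y) $ i" "if i = j then 1 else 0"] by simp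
  qed
  ultimately show ?thesis by simp
qed

lemma rho_du:
  fixes u :: real
  assumes u: "u > 0"
  shows "((\<lambda>u. (4 * pi * u) powr a * exp (- N / (4 * u))) has_real_derivative
     (4 * pi * u) powr a * exp (- N / (4 * u)) * (a / u + N / (4 * u\<^sup>2))) (at u)"
proof -
  have pos: "4 * pi * u > 0" using u by simp
  have "((\<lambda>u. (4 * pi * u) powr a * exp (- N / (4 * u))) has_real_derivative
      a * (4 * pi * u) powr (a - 1) * (4 * pi) * exp (- N / (4 * u))
      + (4 * pi * u) powr a * (exp (- N / (4 * u)) * (N / (4 * u\<^sup>2)))) (at u)"
    using u pos
    by (auto intro!: derivative_eq_intros simp: power2_eq_square field_simps)
  moreover have "(4 * pi * u) powr (a - 1) = (4 * pi * u) powr a / (4 * pi * u)"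
    using pos by (simp add: powr_diff)
  ultimately show ?thesis
    by (rule_tac DERIV_cong) (use u pos in \<open>auto simp: field_simps\<close>)
qed

lemma rho_dt:
  fixes y :: "real^'n::finite"
  assumes st: "t < s"
  shows "((\<lambda>t. rho_heat y s x t) has_real_derivative
     rho_heat y s x t * ((real CARD('n) - 1) / (2 * (s - t)) - (norm (x - y))\<^sup>2 / (4 * (s - t)\<^sup>2))) (at t)"
proof -
  define a where "a = - (real CARD('n) - 1) / 2"
  define N where "N = (norm (x - y))\<^sup>2"
  have u: "s - t > 0" using st by simp
  have d1: "((\<lambda>u. (4 * pi * u) powr a * exp (- N / (4 * u))) has_real_derivative
     (4 * pi * (s - t)) powr a * exp (- N / (4 * (s - t))) * (a / (s - t) + N / (4 * (s - t)\<^sup>2))) (at (s - t))"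
    by (rule rho_du[OF u])
  have d2: "((\<lambda>t. s - t) has_real_derivative -1) (at t)" by (auto intro!: derivative_eq_intros)
  have D: "((\<lambda>t. (4 * pi * (s - t)) powr a * exp (- N / (4 * (s - t)))) has_real_derivative
     (4 * pi * (s - t)) powr a * exp (- N / (4 * (s - t))) * ((real CARD('n) - 1) / (2 * (s - t)) - N / (4 * (s - t)\<^sup>2))) (at t)"
    by (rule DERIV_cong[OF DERIV_chain2[OF d1 d2]]) (use st in \<open>simp add: a_def field_simps\<close>)
  show ?thesis unfolding rho_heat_def a_def[symmetric] N_def[symmetric] by (rule D)
qed

lemma rho_pos: "t < s \<Longrightarrow> rho_heat y s x t > 0"
  unfolding rho_heat_def by simp

lemma rho_cont_x: "continuous_on UNIV (\<lambda>x. rho_heat y s x t)"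
  unfolding rho_heat_def divide_inverse by (intro continuous_intros)


lemma glaeser1d:
  fixes g g1 g2 :: "real \<Rightarrow> real"
  assumes nn: "\<And>h. g h \<ge> 0"
    and d1: "\<And>h. (g has_real_derivative g1 h) (at h)"
    and d2: "\<And>h. (g1 has_real_derivative g2 h) (at h)"
    and bd: "\<And>h. \<bar>g2 h\<bar> \<le> M" and M: "M > 0"
  shows "(g1 0)\<^sup>2 \<le> 2 * M * g 0"
proof -
  define k where "k h = g 0 + h * g1 0 + M * h\<^sup>2 / 2 - g h" for h
  define k1 where "k1 h = g1 0 + M * h - g1 h" for h
  have dk: "(k has_real_derivative k1 h) (at h)" for h
    unfolding k_def k1_def by (auto intro!: derivative_eq_intros d1 simp: power2_eq_square)
  have dk1: "(k1 has_real_derivative (M - g2 h)) (at h)" for h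
    unfolding k1_def by (auto intro!: derivative_eq_intros d2)
  have k1pos: "k1 h \<ge> 0" if "h \<ge> 0" for h
  proof -
    have "k1 0 \<le> k1 h"
      by (rule deriv_nonneg_imp_mono[OF dk1]) (use bd that in \<open>auto simp: abs_le_iff\<close>)
    thus ?thesis by (simp add: k1_def)
  qed
  have k1neg: "k1 h \<le> 0" if "h \<le> 0" for h
  proof -
    have "k1 h \<le> k1 0"
      by (rule deriv_nonneg_imp_mono[OF dk1]) (use bd that in \<open>auto simp: abs_le_iff\<close>)
    thus ?thesis by (simp add: k1_def)
  qed
  have kpos: "k h \<ge> 0" for h
  proof (cases "h \<ge> 0")
    case True
    have "k 0 \<le> k h"
      by (rule deriv_nonneg_imp_mono[OF dk]) (use True k1pos in auto)
    thus ?thesis by (simp add: k_def)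
  next
    case False
    have "k 0 \<le> k h"
      by (rule deriv_nonpos_imp_antimono[OF dk]) (use False k1neg in auto)
    thus ?thesis by (simp add: k_def)
  qed
  define h where "h = - g1 0 / M"
  have "0 \<le> g h" by (rule nn)
  also have "g h \<le> g 0 + h * g1 0 + M * h\<^sup>2 / 2" using kpos[of h] by (simp add: k_def)
  also have "\<dots> = g 0 - (g1 0)\<^sup>2 / (2 * M)" unfolding h_def using M by (simp add: field_simps power2_eq_square)
  finally show ?thesis using M by (simp add: field_simps)
qed

locale bump =
  fixes \<eta> :: "real^'n::finite \<Rightarrow> real"
  assumes smooth: "smooth_fun \<eta>"
    and supp: "\<exists>r<1/2. \<forall>x. r \<le> norm x \<longrightarrow> \<eta> x = 0"
    and bounds: "\<forall>x. 0 \<le> \<eta> x \<and> \<eta> x \<le> 1"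
    and one: "\<forall>x. norm x < 1/4 \<longrightarrow> \<eta> x = 1"
begin

definition eta1 :: "'n \<Rightarrow> real^'n \<Rightarrow> real" where "eta1 i = dirpd (axis i 1) \<eta>"
definition eta2 :: "'n \<Rightarrow> 'n \<Rightarrow> real^'n \<Rightarrow> real" where
  "eta2 i j = dirpd (axis j 1) (dirpd (axis i 1) \<eta>)"

lemma sm0: "continuous_on UNIV \<eta>" and sm0d: "\<And>v z. v \<in> Basis \<Longrightarrow> (\<lambda>h. \<eta> (z + h *\<^sub>R v)) differentiable (at 0)"
  using smooth[unfolded smooth_fun_def, rule_format, of "[]"] by auto

lemma sm1: "continuous_on UNIV (eta1 i)"
  "\<And>v z. v \<in> Basis \<Longrightarrow> (\<lambda>h. eta1 i (z + h *\<^sub>R v)) differentiable (at 0)"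
  using smooth[unfolded smooth_fun_def, rule_format, of "[axis i 1]"] by (auto simp: eta1_def)

lemma sm2: "continuous_on UNIV (eta2 i j)"
  using smooth[unfolded smooth_fun_def, rule_format, of "[axis j 1, axis i 1]"] by (auto simp: eta2_def)

lemma eta_hpd: "hpd (axis i 1) \<eta> (eta1 i)"
  unfolding eta1_def by (rule hpd_of_differentiable) (use sm0d in auto)

lemma eta1_hpd: "hpd (axis j 1) (eta1 i) (eta2 i j)"
proof -
  have "hpd (axis j 1) (eta1 i) (dirpd (axis j 1) (eta1 i))"
    by (rule hpd_of_differentiable) (use sm1 in auto)
  thus ?thesis by (simp add: eta2_def eta1_def)
qed

lemma eta_nonneg: "\<eta> x \<ge> 0" and eta_le1: "\<eta> x \<le> 1" using bounds by auto

lemma deriv_vanish: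
  assumes "norm z < 1/4 \<or> norm z \<ge> 1/2"
  shows "eta1 i z = 0" "eta2 i j z = 0"
proof -
  obtain r where r: "r < 1/2" "\<forall>x. r \<le> norm x \<longrightarrow> \<eta> x = 0" using supp by blast
  define U where "U = (if norm z < 1/4 then ball (0::real^'n) (1/4) else {x::real^'n. r < norm x})"
  define c where "c = (if norm z < 1/4 then 1 else (0::real))"
  have U: "open U" "z \<in> U" unfolding U_def using assms r(1)
    by (auto intro!: open_Collect_less continuous_intros)
  have cU: "\<forall>x\<in>U. \<eta> x = c" unfolding U_def c_def using one r(2) by auto
  have e1: "\<forall>x\<in>U. eta1 i x = 0" using hpd_zero_open[OF eta_hpd U(1) cU] by blast
  show "eta1 i z = 0" using e1 U by blast
  show "eta2 i j z = 0" using hpd_zero_open[OF eta1_hpd U(1) e1 U(2)] .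
qed

lemma bounded_cs:
  fixes f :: "real^'n \<Rightarrow> real"
  assumes "continuous_on UNIV f" "\<And>z. norm z \<ge> 1/2 \<Longrightarrow> f z = 0"
  shows "\<exists>M\<ge>0. \<forall>z. \<bar>f z\<bar> \<le> M"
proof -
  have "compact (f ` cball 0 1)"
    by (rule compact_continuous_image[OF continuous_on_subset[OF assms(1)]]) auto
  then obtain M where M: "\<forall>w\<in>f ` cball 0 1. norm w \<le> M" using compact_imp_bounded bounded_iff by metis
  show ?thesis
  proof (intro exI[of _ "max M 0"] conjI allI)
    fix z :: "real^'n"
    show "\<bar>f z\<bar> \<le> max M 0"
    proof (cases "norm z \<le> 1")
      case True
      hence "f z \<in> f ` cball 0 1" by simp
      hence "norm (f z) \<le> M" using M by blast
      thus ?thesis by simp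
    next
      case False thus ?thesis using assms(2)[of z] by simp
    qed
  qed simp
qed

lemma M1_ex: "\<exists>M1\<ge>0. \<forall>i z. \<bar>eta1 i z\<bar> \<le> M1"
proof -
  obtain M where M: "M \<ge> 0" "\<forall>z. \<bar>\<Sum>i\<in>UNIV. \<bar>eta1 i z\<bar>\<bar> \<le> M"
    using bounded_cs[of "\<lambda>z. \<Sum>i\<in>UNIV. \<bar>eta1 i z\<bar>"]
      deriv_vanish(1) by (force intro!: continuous_intros sm1)
  have "\<bar>eta1 i z\<bar> \<le> M" for i z
  proof -
    have "\<bar>eta1 i z\<bar> \<le> (\<Sum>i\<in>UNIV. \<bar>eta1 i z\<bar>)" by (rule member_le_sum) auto
    thus ?thesis using M(2)[rule_format, of z] by simp
  qed
  thus ?thesis using M(1) by blast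
qed

lemma M2_ex: "\<exists>M2\<ge>0. \<forall>i j z. \<bar>eta2 i j z\<bar> \<le> M2"
proof -
  obtain M where M: "M \<ge> 0" "\<forall>z. \<bar>\<Sum>i\<in>UNIV. \<Sum>j\<in>UNIV. \<bar>eta2 i j z\<bar>\<bar> \<le> M"
    using bounded_cs[of "\<lambda>z. \<Sum>i\<in>UNIV. \<Sum>j\<in>UNIV. \<bar>eta2 i j z\<bar>"]
      deriv_vanish(2) by (force intro!: continuous_intros sm2)
  have "\<bar>eta2 i j z\<bar> \<le> M" for i j z
  proof -
    have "\<bar>eta2 i j z\<bar> \<le> (\<Sum>j\<in>UNIV. \<bar>eta2 i j z\<bar>)" by (rule member_le_sum) auto
    also have "\<dots> \<le> (\<Sum>i\<in>UNIV. \<Sum>j\<in>UNIV. \<bar>eta2 i j z\<bar>)"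
      by (rule member_le_sum[where f="\<lambda>i. \<Sum>j\<in>UNIV. \<bar>eta2 i j z\<bar>"]) (auto intro: sum_nonneg)
    finally show ?thesis using M(2)[rule_format, of z] by simp
  qed
  thus ?thesis using M(1) by blast
qed

lemma glaeser:
  assumes M2: "\<forall>i j z. \<bar>eta2 i j z\<bar> \<le> M2"
  shows "(eta1 i z)\<^sup>2 \<le> 2 * (M2 + 1) * \<eta> z"
proof -
  have M2nn: "M2 \<ge> 0" using M2 by (meson abs_ge_zero order_trans)
  have "(eta1 i (z + 0 *\<^sub>R axis i 1))\<^sup>2 \<le> 2 * (M2 + 1) * \<eta> (z + 0 *\<^sub>R axis i 1)"
  proof (rule glaeser1d[of "\<lambda>h. \<eta> (z + h *\<^sub>R axis i 1)" "\<lambda>h. eta1 i (z + h *\<^sub>R axis i 1)" "\<lambda>h. eta2 i i (z + h *\<^sub>R axis i 1)" "M2 + 1"])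
    show "\<And>h. 0 \<le> \<eta> (z + h *\<^sub>R axis i 1)" by (rule eta_nonneg)
    show "\<And>h. ((\<lambda>h. \<eta> (z + h *\<^sub>R axis i 1)) has_real_derivative eta1 i (z + h *\<^sub>R axis i 1)) (at h)"
      by (rule hpd_line[OF eta_hpd])
    show "\<And>h. ((\<lambda>h. eta1 i (z + h *\<^sub>R axis i 1)) has_real_derivative eta2 i i (z + h *\<^sub>R axis i 1)) (at h)"
      by (rule hpd_line[OF eta1_hpd])
    show "\<And>h. \<bar>eta2 i i (z + h *\<^sub>R axis i 1)\<bar> \<le> M2 + 1" using M2 by (meson add_increasing2 zero_le_one order_trans)
    show "M2 + 1 > 0" using M2nn by simp
  qed
  thus ?thesis by simp
qed

end


definition KB :: "nat \<Rightarrow> real" where "KB n = 2 + 2 * (128 * (real n + 1)) ^ (n + 1)"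

lemma poly_exp_bound:
  fixes w :: real and m :: nat
  assumes "w \<ge> 0" "m > 0"
  shows "w ^ m * exp (- w / 128) \<le> (128 * real m) ^ m"
proof -
  have "(1 + (w / 128) / real m) ^ m \<le> exp (w / 128)"
    by (rule exp_ge_one_plus_x_over_n_power_n) (use assms in auto)
  moreover have "(w / (128 * real m)) ^ m \<le> (1 + (w / 128) / real m) ^ m"
    by (rule power_mono) (use assms in auto)
  ultimately have "(w / (128 * real m)) ^ m \<le> exp (w / 128)" by linarith
  hence "w ^ m / (128 * real m) ^ m \<le> exp (w / 128)" by (simp add: power_divide)
  hence "w ^ m \<le> (128 * real m) ^ m * exp (w / 128)" using assms by (simp add: field_simps)
  hence "w ^ m * exp (- w / 128) \<le> (128 * real m) ^ m * exp (w / 128) * exp (- w / 128)"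
    by (rule mult_right_mono) simp
  also have "\<dots> = (128 * real m) ^ m" by (simp add: exp_minus_inverse mult.assoc flip: exp_add)
  finally show ?thesis .
qed

lemma kernel_bound:
  fixes \<tau> :: real and n :: nat
  assumes tau: "\<tau> > 0" and n: "n \<ge> 1"
  shows "(1 + 1 / \<tau>) * (4 * pi * \<tau>) powr (- (real n - 1) / 2) * exp (- 1 / (64 * \<tau>))
     \<le> KB n * exp (- 1 / (128 * \<tau>))"
proof -
  define k where "k = (real n - 1) / 2"
  have k: "0 \<le> k" "k \<le> real n" using n unfolding k_def by auto
  define P where "P = (4 * pi * \<tau>) powr (- k)"
  define E where "E = exp (- 1 / (128 * \<tau>))"
  have Epos: "E > 0" unfolding E_def by simp
  have EE: "exp (- 1 / (64 * \<tau>)) = E * E" unfolding E_def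
    by (simp flip: exp_add)
  have KB2: "KB n \<ge> 2" unfolding KB_def by simp
  have A: "(1 + 1 / \<tau>) * P * E \<le> KB n"
  proof (cases "\<tau> \<ge> 1")
    case True
    have "4 * pi * \<tau> \<ge> 4 * pi * 1" using True by (intro mult_left_mono) auto
    hence "1 \<le> 4 * pi * \<tau>" using pi_gt3 by linarith
    hence "1 \<le> (4 * pi * \<tau>) powr k"
      by (rule ge_one_powr_ge_zero) (use k in auto)
    hence P1: "P \<le> 1" "P \<ge> 0" unfolding P_def by (auto simp: powr_minus inverse_le_1_iff)
    have E1: "E \<le> 1" unfolding E_def using tau by simp
    have "(1 + 1 / \<tau>) \<le> 2" using True by (simp add: field_simps)
    hence "(1 + 1 / \<tau>) * P * E \<le> 2 * 1 * 1"
      using P1 E1 Epos tau by (intro mult_mono) auto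
    thus ?thesis using KB2 by simp
  next
    case False
    define w where "w = 1 / \<tau>"
    have w: "w > 1" unfolding w_def using False tau by (simp add: field_simps)
    have "P = (4 * pi) powr (- k) * \<tau> powr (- k)" unfolding P_def by (simp add: powr_mult)
    also have "(4 * pi) powr (- k) \<le> 1"
    proof -
      have "1 \<le> (4 * pi) powr k" by (rule ge_one_powr_ge_zero) (use pi_gt3 k in auto)
      thus ?thesis by (auto simp: powr_minus inverse_le_1_iff)
    qed
    hence "(4 * pi) powr (- k) * \<tau> powr (- k) \<le> 1 * \<tau> powr (- k)"
      by (intro mult_right_mono) auto
    also have "\<tau> powr (- k) = w powr k" unfolding w_def using tau by (simp add: powr_minus powr_divide inverse_eq_divide)
    also have "\<dots> \<le> w powr (real n)" by (rule powr_mono) (use k w in auto)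
    also have "\<dots> = w ^ n" using w by (simp add: powr_realpow)
    finally have Pw: "P \<le> w ^ n" by simp
    have P0: "P \<ge> 0" unfolding P_def by simp
    have "(1 + 1 / \<tau>) \<le> 2 * w" using w unfolding w_def by simp
    hence "(1 + 1 / \<tau>) * P * E \<le> (2 * w) * w ^ n * E"
      using Pw P0 Epos w by (intro mult_right_mono mult_mono) auto
    also have "\<dots> = 2 * (w ^ (n + 1) * exp (- w / 128))"
      unfolding E_def w_def by (simp add: field_simps)
    also have "\<dots> \<le> 2 * (128 * real (n + 1)) ^ (n + 1)"
      using poly_exp_bound[of w "n + 1"] w by simp
    also have "\<dots> \<le> KB n" unfolding KB_def by (simp only: of_nat_add of_nat_1)
    finally show ?thesis .
  qed
  have "(1 + 1 / \<tau>) * P * exp (- 1 / (64 * \<tau>)) = ((1 + 1 / \<tau>) * P * E) * E" using EE by simp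
  also have "\<dots> \<le> KB n * E" using A Epos by (intro mult_right_mono) auto
  finally have F: "(1 + 1 / \<tau>) * P * exp (- 1 / (64 * \<tau>)) \<le> KB n * E" .
  have mk: "- k = - (real n - 1) / 2" unfolding k_def by (simp add: field_simps)
  show ?thesis using F unfolding P_def E_def mk .
qed


lemma hpd_translate: "hpd v F F' \<Longrightarrow> hpd v (\<lambda>x. F (x - y)) (\<lambda>x. F' (x - y))"
  unfolding hpd_def
proof (intro allI)
  fix x assume A: "\<forall>x. ((\<lambda>h. F (x + h *\<^sub>R v)) has_real_derivative F' x) (at 0)"
  have "(\<lambda>h. F (x + h *\<^sub>R v - y)) = (\<lambda>h. F ((x - y) + h *\<^sub>R v))" by (simp add: algebra_simps)
  thus "((\<lambda>h. F (x + h *\<^sub>R v - y)) has_real_derivative F' (x - y)) (at 0)" using A by simp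
qed

lemma cont_Q_slice:
  assumes "cont_Q T g" "t \<in> {0..T}"
  shows "continuous_on UNIV (\<lambda>x. g x t)"
proof -
  have "continuous_on UNIV (\<lambda>x. (\<lambda>p. g (fst p) (snd p)) (x, t))"
    by (rule continuous_on_compose2[OF assms(1)[unfolded cont_Q_def]]) (use assms(2) in \<open>auto intro!: continuous_intros\<close>)
  thus ?thesis by simp
qed

lemma cont_Q_swap:
  assumes "cont_Q T g" "S \<subseteq> {0..T}"
  shows "continuous_on (S \<times> UNIV) (\<lambda>p. g (snd p) (fst p))"
proof -
  have "continuous_on (S \<times> UNIV) (\<lambda>p. (\<lambda>p. g (fst p) (snd p)) (snd p, fst p))"
    by (rule continuous_on_compose2[OF assms(1)[unfolded cont_Q_def]]) (use assms(2) in \<open>auto intro!: continuous_intros\<close>)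
  thus ?thesis by simp
qed

locale setting = bump \<eta> for \<eta> :: "real^'n::finite \<Rightarrow> real" +
  fixes M1 M2 :: real
    and W :: "real \<Rightarrow> real" and \<epsilon> T :: real
    and u :: "real^'n \<Rightarrow> real \<Rightarrow> real^'n" and \<phi> :: "real^'n \<Rightarrow> real \<Rightarrow> real"
    and y :: "real^'n" and s t :: real
  assumes M1: "\<forall>i z. \<bar>eta1 i z\<bar> \<le> M1" and M2: "\<forall>i j z. \<bar>eta2 i j z\<bar> \<le> M2"
    and Wnn: "\<forall>x. 0 \<le> W x"
    and Wd: "\<forall>x. (W has_real_derivative deriv W x) (at x)"
    and Wdc: "continuous_on UNIV (deriv W)"
    and eps: "0 < \<epsilon>"
    and u_cont: "\<forall>i. continuous_on UNIV (\<lambda>z::(real^'n) \<times> real. u (fst z) (snd z) $ i)"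
    and reg: "phase_regular T \<phi>"
    and pde: "\<forall>x. \<forall>t\<in>{0..T}. pdt T \<phi> x t + (\<Sum>i\<in>UNIV. u x t $ i * pdx i \<phi> x t)
              = (\<Sum>i\<in>UNIV. pdx i (pdx i \<phi>) x t) - deriv W (\<phi> x t) / \<epsilon>\<^sup>2"
    and t0: "0 < t" and ts: "t < s" and tT: "t < T"
begin

definition "\<tau>0 = s - t"
definition "r x = rho_heat y s x t"
definition "hn x = \<eta> (x - y)"
definition "hn1 i x = eta1 i (x - y)"
definition "hn2 i j x = eta2 i j (x - y)"
definition "R x = r x * hn x"
definition "R1 j x = drho y s t j x * hn x + r x * hn1 j x"
definition "R2 j i x = ddrho y s t j i x * hn x + drho y s t j x * hn1 i x + drho y s t i x * hn1 j x + r x * hn2 j i x"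
definition "p i x = pdx i \<phi> x t"
definition "pp i j x = pdx j (pdx i \<phi>) x t"
definition "q i x = pdt T (pdx i \<phi>) x t"
definition "ft x = pdt T \<phi> x t"
definition "ee x = e_eps W \<epsilon> \<phi> x t"
definition "dW x = deriv W (\<phi> x t)"

lemma tau0: "\<tau>0 > 0" using ts by (simp add: \<tau>0_def)
lemma tin: "t \<in> {0..T}" using t0 tT by simp

lemma regs:
  "cont_Q T \<phi>" "has_pdx i \<phi> T" "cont_Q T (pdx i \<phi>)"
  "has_pdx j (pdx i \<phi>) T" "cont_Q T (pdx j (pdx i \<phi>))"
  "has_pdt T \<phi>" "cont_Q T (pdt T \<phi>)" "has_pdt T (pdx i \<phi>)" "cont_Q T (pdt T (pdx i \<phi>))"
  using reg unfolding phase_regular_def by auto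

lemma phi_hpd: "\<tau> \<in> {0..T} \<Longrightarrow> hpd (axis i 1) (\<lambda>x. \<phi> x \<tau>) (\<lambda>x. pdx i \<phi> x \<tau>)"
  by (rule has_pdx_hpd[OF regs(2)])

lemma p_hpd: "hpd (axis i 1) (\<lambda>x. \<phi> x t) (p i)"
  unfolding p_def[abs_def] by (rule phi_hpd[OF tin])

lemma pp_hpd: "hpd (axis j 1) (p i) (pp i j)"
  unfolding p_def[abs_def] pp_def[abs_def] by (rule has_pdx_hpd[OF regs(4) tin])

lemma c_phi: "continuous_on UNIV (\<lambda>x. \<phi> x t)" by (rule cont_Q_slice[OF regs(1) tin])
lemma c_p: "continuous_on UNIV (p i)" unfolding p_def[abs_def] by (rule cont_Q_slice[OF regs(3) tin])
lemma c_pp: "continuous_on UNIV (pp i j)" unfolding pp_def[abs_def] by (rule cont_Q_slice[OF regs(5) tin])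
lemma c_q: "continuous_on UNIV (q i)" unfolding q_def[abs_def] by (rule cont_Q_slice[OF regs(9) tin])
lemma c_ft: "continuous_on UNIV ft" unfolding ft_def[abs_def] by (rule cont_Q_slice[OF regs(7) tin])
lemma c_dW: "continuous_on UNIV dW" unfolding dW_def[abs_def]
  by (rule continuous_on_compose2[OF Wdc c_phi]) auto
lemma c_W: "continuous_on UNIV (\<lambda>x. W (\<phi> x t))"
proof -
  have "continuous_on UNIV W" using Wd by (meson DERIV_isCont continuous_at_imp_continuous_on)
  thus ?thesis by (rule continuous_on_compose2[OF _ c_phi]) auto
qed
lemma c_ee: "continuous_on UNIV ee"
  unfolding ee_def[abs_def] e_eps_def p_def[symmetric]
  by (intro continuous_intros c_p c_W) (use eps in auto)

lemma pp_sym: "pp i j x = pp j i x"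
  by (rule schwarz[OF p_hpd p_hpd pp_hpd pp_hpd c_pp c_pp])

lemma c_r: "continuous_on UNIV r" unfolding r_def[abs_def] by (rule rho_cont_x)
lemma c_drho: "continuous_on UNIV (drho y s t i)"
  unfolding drho_def[abs_def] by (intro continuous_intros rho_cont_x) (use ts in auto)
lemma c_ddrho: "continuous_on UNIV (ddrho y s t i j)"
  unfolding ddrho_def[abs_def] by (intro continuous_intros rho_cont_x) (use ts in auto)
lemma c_hn: "continuous_on UNIV hn" unfolding hn_def[abs_def]
  by (rule continuous_on_compose2[OF sm0]) (auto intro!: continuous_intros)
lemma c_hn1: "continuous_on UNIV (hn1 i)" unfolding hn1_def[abs_def]
  by (rule continuous_on_compose2[OF sm1(1)]) (auto intro!: continuous_intros)
lemma c_hn2: "continuous_on UNIV (hn2 i j)" unfolding hn2_def[abs_def]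
  by (rule continuous_on_compose2[OF sm2]) (auto intro!: continuous_intros)
lemma c_R: "continuous_on UNIV R" unfolding R_def[abs_def] by (intro continuous_intros c_r c_hn)
lemma c_R1: "continuous_on UNIV (R1 j)" unfolding R1_def[abs_def] by (intro continuous_intros c_r c_hn c_drho c_hn1)
lemma c_R2: "continuous_on UNIV (R2 j i)" unfolding R2_def[abs_def]
  by (intro continuous_intros c_r c_hn c_drho c_hn1 c_ddrho c_hn2)

lemma hn_hpd: "hpd (axis i 1) hn (hn1 i)"
  unfolding hn_def[abs_def] hn1_def[abs_def] by (rule hpd_translate[OF eta_hpd])
lemma hn1_hpd: "hpd (axis j 1) (hn1 i) (hn2 i j)"
  unfolding hn1_def[abs_def] hn2_def[abs_def] by (rule hpd_translate[OF eta1_hpd])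
lemma r_hpd: "hpd (axis i 1) r (drho y s t i)"
  unfolding r_def[abs_def] by (rule rho_hpd) (use ts in auto)
lemma drho_hpd': "hpd (axis j 1) (drho y s t i) (ddrho y s t i j)"
  by (rule drho_hpd) (use ts in auto)

lemma R_hpd: "hpd (axis j 1) R (R1 j)"
  unfolding R_def[abs_def] R1_def[abs_def] by (rule hpd_mult[OF r_hpd hn_hpd])

lemma R1_hpd: "hpd (axis i 1) (R1 j) (R2 j i)"
proof -
  have "hpd (axis i 1) (R1 j)
     (\<lambda>x. (ddrho y s t j i x * hn x + drho y s t j x * hn1 i x) + (drho y s t i x * hn1 j x + r x * hn2 j i x))"
    unfolding R1_def[abs_def] by (rule hpd_add[OF hpd_mult[OF drho_hpd' hn_hpd] hpd_mult[OF r_hpd hn1_hpd]])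
  thus ?thesis unfolding R2_def[abs_def] by (simp add: add.assoc)
qed

lemma supp_hn: "norm (x - y) \<ge> 1/2 \<Longrightarrow> hn x = 0"
  unfolding hn_def using supp by force

lemma out_ball: "x \<notin> cball y (1/2) \<Longrightarrow> norm (x - y) \<ge> 1/2"
  by (simp add: dist_norm norm_minus_commute)

lemma supp_R: "x \<notin> cball y (1/2) \<Longrightarrow> R x = 0"
  unfolding R_def using supp_hn out_ball by simp
lemma supp_hn1: "norm (x - y) \<ge> 1/2 \<Longrightarrow> hn1 i x = 0"
  unfolding hn1_def using deriv_vanish by simp
lemma supp_hn2: "norm (x - y) \<ge> 1/2 \<Longrightarrow> hn2 i j x = 0"
  unfolding hn2_def using deriv_vanish by simp
lemma supp_R1: "x \<notin> cball y (1/2) \<Longrightarrow> R1 j x = 0"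
  unfolding R1_def using supp_hn supp_hn1 out_ball by simp
lemma supp_R2: "x \<notin> cball y (1/2) \<Longrightarrow> R2 j i x = 0"
  unfolding R2_def using supp_hn supp_hn1 supp_hn2 out_ball by simp

end


context setting
begin

definition "dl = min t (T - t)"
lemma dl: "dl > 0" "\<And>\<tau>. \<tau> \<in> ball t dl \<Longrightarrow> 0 < \<tau> \<and> \<tau> < T"
  unfolding dl_def using t0 tT by (auto simp: dist_real_def)
lemma dl_sub: "ball t dl \<subseteq> {0..T}" using dl(2) by fastforce

lemma int_cs:
  fixes f :: "real^'n \<Rightarrow> real"
  assumes "continuous_on UNIV f" "\<And>x. x \<notin> cball y (1/2) \<Longrightarrow> f x = 0"
  shows "integrable lborel f"
  by (rule integrable_cs[OF assms])

lemma DUI_fix: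
  fixes g :: "real^'n \<Rightarrow> real" and F :: "real^'n \<Rightarrow> real \<Rightarrow> real"
  assumes cg: "continuous_on UNIV g" and sg: "\<And>x. x \<notin> cball y (1/2) \<Longrightarrow> g x = 0"
    and cF: "cont_Q T F" and hF: "has_pdt T F" and cFt: "cont_Q T (pdt T F)"
  shows "((\<lambda>\<tau>. \<integral>x. g x * F x \<tau> \<partial>lborel) has_real_derivative (\<integral>x. g x * pdt T F x t \<partial>lborel)) (at t)"
proof (rule DUI[where \<delta>=dl and c=y and r="1/2" and g="\<lambda>\<tau> x. g x * F x \<tau>" and g'="\<lambda>\<tau> x. g x * pdt T F x \<tau>"])
  show "0 < dl" by (rule dl(1))
  show "\<And>\<tau> x. x \<notin> cball y (1/2) \<Longrightarrow> g x * F x \<tau> = 0" using sg by simp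
  show "((\<lambda>\<tau>. g x * F x \<tau>) has_real_derivative g x * pdt T F x \<tau>) (at \<tau>)" if "\<tau> \<in> ball t dl" for \<tau> x
    using has_pdt_deriv[OF hF, of \<tau> x] dl(2)[OF that] by (auto intro!: derivative_eq_intros)
  have c1: "continuous_on (ball t dl \<times> UNIV) (\<lambda>p. g (snd p))"
    by (rule continuous_on_compose2[OF cg]) (auto intro!: continuous_intros)
  have c2: "continuous_on (ball t dl \<times> UNIV) (\<lambda>p. pdt T F (snd p) (fst p))"
    by (rule cont_Q_swap[OF cFt dl_sub])
  show "continuous_on (ball t dl \<times> UNIV) (\<lambda>(\<tau>, x). g x * pdt T F x \<tau>)"
    using continuous_on_mult[OF c1 c2] by (simp add: split_beta)
  show "continuous_on UNIV (\<lambda>x. g x * F x \<tau>)" if "\<tau> \<in> ball t dl" for \<tau>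
    using dl_sub that by (intro continuous_on_mult cg cont_Q_slice[OF cF]) auto
qed

lemma I1:
  "(\<integral>x. R x * p i x * q i x + (R1 i x * p i x + R x * pp i i x) * ft x \<partial>lborel) = 0"
proof -
  define g where "g x = R x * p i x" for x
  define g' where "g' x = R1 i x * p i x + R x * pp i i x" for x
  have hg: "hpd (axis i 1) g g'" unfolding g_def[abs_def] g'_def[abs_def] by (rule hpd_mult[OF R_hpd pp_hpd])
  have cg: "continuous_on UNIV g" unfolding g_def[abs_def] by (intro continuous_intros c_R c_p)
  have cg': "continuous_on UNIV g'" unfolding g'_def[abs_def] by (intro continuous_intros c_R c_p c_R1 c_pp)
  have sg: "g x = 0" if "x \<notin> cball y (1/2)" for x unfolding g_def using supp_R[OF that] by simp
  have sg': "g' x = 0" if "x \<notin> cball y (1/2)" for x unfolding g'_def using supp_R[OF that] supp_R1[OF that] by simp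
  have D1: "((\<lambda>\<tau>. \<integral>x. g x * pdx i \<phi> x \<tau> \<partial>lborel) has_real_derivative (\<integral>x. g x * q i x \<partial>lborel)) (at t)"
    unfolding q_def by (rule DUI_fix[OF cg sg regs(3) regs(8) regs(9)])
  have D2: "((\<lambda>\<tau>. \<integral>x. g' x * \<phi> x \<tau> \<partial>lborel) has_real_derivative (\<integral>x. g' x * ft x \<partial>lborel)) (at t)"
    unfolding ft_def by (rule DUI_fix[OF cg' sg' regs(1) regs(6) regs(7)])
  have eq: "(\<integral>x. g x * pdx i \<phi> x \<tau> \<partial>lborel) = - (\<integral>x. g' x * \<phi> x \<tau> \<partial>lborel)" if "\<tau> \<in> ball t dl" for \<tau>
  proof -
    have \<tau>: "\<tau> \<in> {0..T}" using dl_sub that by auto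
    have "(\<integral>x. g' x * \<phi> x \<tau> \<partial>lborel) = - (\<integral>x. g x * pdx i \<phi> x \<tau> \<partial>lborel)"
      by (rule ibp[OF hg phi_hpd[OF \<tau>] cg cg' cont_Q_slice[OF regs(1) \<tau>] cont_Q_slice[OF regs(3) \<tau>] sg])
    thus ?thesis by simp
  qed
  have D3: "((\<lambda>\<tau>. \<integral>x. g x * pdx i \<phi> x \<tau> \<partial>lborel) has_real_derivative - (\<integral>x. g' x * ft x \<partial>lborel)) (at t)"
  proof (rule has_field_derivative_transform_within_open[OF DERIV_minus[OF D2] open_ball])
    show "t \<in> ball t dl" using dl by simp
    show "\<And>\<tau>. \<tau> \<in> ball t dl \<Longrightarrow> - (\<integral>x. g' x * \<phi> x \<tau> \<partial>lborel) = (\<integral>x. g x * pdx i \<phi> x \<tau> \<partial>lborel)"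
      using eq by simp
  qed
  have E: "(\<integral>x. g x * q i x \<partial>lborel) = - (\<integral>x. g' x * ft x \<partial>lborel)" using DERIV_unique[OF D1 D3] .
  have i1: "integrable lborel (\<lambda>x. g x * q i x)"
    by (rule int_cs) (use sg in \<open>auto intro!: continuous_intros cg c_q\<close>)
  have i2: "integrable lborel (\<lambda>x. g' x * ft x)"
    by (rule int_cs) (use sg' in \<open>auto intro!: continuous_intros cg' c_ft\<close>)
  have "(\<integral>x. g x * q i x + g' x * ft x \<partial>lborel) = 0"
    using Bochner_Integration.integral_add[OF i1 i2] E by simp
  thus ?thesis unfolding g_def g'_def by simp
qed

end


context setting
begin

lemma ibp_loc:
  fixes F G :: "real^'n \<Rightarrow> real"
  assumes hF: "hpd v F F'" and hG: "hpd v G G'"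
    and cF: "continuous_on UNIV F" and cF': "continuous_on UNIV F'"
    and cG: "continuous_on UNIV G" and cG': "continuous_on UNIV G'"
    and sF: "\<And>x. x \<notin> cball y (1/2) \<Longrightarrow> F x = 0"
  shows "(\<integral>x. F' x * G x + F x * G' x \<partial>lborel) = 0"
  by (rule ibp0[OF hpd_mult[OF hF hG], of y "1/2"])
     (use sF continuous_on_mult[OF cF cG] continuous_on_add[OF continuous_on_mult[OF cF' cG] continuous_on_mult[OF cF cG']] in auto)

lemma Z2: "(\<integral>x. R2 j i x * (\<epsilon> * (p i x * p j x)) + R1 j x * (\<epsilon> * (pp i i x * p j x + p i x * pp j i x)) \<partial>lborel) = 0"
proof (rule ibp_loc[OF R1_hpd])
  show "hpd (axis i 1) (\<lambda>x. \<epsilon> * (p i x * p j x)) (\<lambda>x. \<epsilon> * (pp i i x * p j x + p i x * pp j i x))"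
    by (rule hpd_cmult[OF hpd_mult[OF pp_hpd pp_hpd]])
qed (auto intro!: continuous_intros c_R1 c_R2 c_p c_pp supp_R1)

definition "eej j x = \<epsilon> * (\<Sum>i\<in>UNIV. p i x * pp i j x) + dW x * p j x / \<epsilon>"

lemma ee_hpd: "hpd (axis j 1) ee (eej j)"
proof -
  have h1: "hpd (axis j 1) (\<lambda>x. \<Sum>i\<in>UNIV. p i x * p i x) (\<lambda>x. \<Sum>i\<in>UNIV. pp i j x * p i x + p i x * pp i j x)"
    by (rule hpd_sum) (rule hpd_mult[OF pp_hpd pp_hpd])
  have h2: "hpd (axis j 1) (\<lambda>x. W (\<phi> x t)) (\<lambda>x. deriv W (\<phi> x t) * p j x)"
    by (rule hpd_comp[OF p_hpd]) (use Wd in auto)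
  have "hpd (axis j 1) (\<lambda>x. (\<epsilon> / 2) * (\<Sum>i\<in>UNIV. p i x * p i x) + (1 / \<epsilon>) * W (\<phi> x t))
     (\<lambda>x. (\<epsilon> / 2) * (\<Sum>i\<in>UNIV. pp i j x * p i x + p i x * pp i j x) + (1 / \<epsilon>) * (deriv W (\<phi> x t) * p j x))"
    by (rule hpd_add[OF hpd_cmult[OF h1] hpd_cmult[OF h2]])
  moreover have "(\<lambda>x. (\<epsilon> / 2) * (\<Sum>i\<in>UNIV. p i x * p i x) + (1 / \<epsilon>) * W (\<phi> x t)) = ee"
    unfolding ee_def[abs_def] e_eps_def p_def by (simp add: power2_eq_square)
  moreover have "(\<lambda>x. (\<epsilon> / 2) * (\<Sum>i\<in>UNIV. pp i j x * p i x + p i x * pp i j x) + (1 / \<epsilon>) * (deriv W (\<phi> x t) * p j x)) = eej j"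
  proof
    fix x
    have "(\<Sum>i\<in>UNIV. pp i j x * p i x + p i x * pp i j x) = 2 * (\<Sum>i\<in>UNIV. p i x * pp i j x)"
      by (simp add: sum_distrib_left algebra_simps flip: sum.distrib)
    thus "(\<epsilon> / 2) * (\<Sum>i\<in>UNIV. pp i j x * p i x + p i x * pp i j x) + (1 / \<epsilon>) * (deriv W (\<phi> x t) * p j x) = eej j x"
      unfolding eej_def dW_def by simp
  qed
  ultimately show ?thesis by simp
qed

lemma c_eej: "continuous_on UNIV (eej j)"
  unfolding eej_def[abs_def] by (intro continuous_intros c_p c_pp c_dW) (use eps in auto)

lemma Z3: "(\<integral>x. R2 j j x * ee x + R1 j x * eej j x \<partial>lborel) = 0"
  by (rule ibp_loc[OF R1_hpd ee_hpd c_R1 c_R2 c_ee c_eej supp_R1])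

end


context setting
begin

definition "dlm = min dl (s - t)"
lemma dlm: "dlm > 0" "\<And>\<tau>. \<tau> \<in> ball t dlm \<Longrightarrow> 0 < \<tau> \<and> \<tau> < T \<and> \<tau> < s"
  unfolding dlm_def using dl ts by (auto simp: dist_real_def)
lemma dlm_sub: "ball t dlm \<subseteq> {0..T}" using dlm(2) by fastforce

abbreviation "SS \<equiv> ball t dlm \<times> (UNIV :: (real^'n) set)"

lemma c_rho2: "continuous_on SS (\<lambda>p. rho_heat y s (snd p) (fst p))"
  unfolding rho_heat_def
  by (intro continuous_intros) (auto dest!: dlm(2))

lemma cs: "cont_Q T g \<Longrightarrow> continuous_on SS (\<lambda>p. g (snd p) (fst p))"
  by (rule cont_Q_swap[OF _ dlm_sub])

lemma c_Wphi2: "continuous_on SS (\<lambda>p. W (\<phi> (snd p) (fst p)))"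
proof -
  have "continuous_on UNIV W" using Wd by (meson DERIV_isCont continuous_at_imp_continuous_on)
  thus ?thesis by (rule continuous_on_compose2[OF _ cs[OF regs(1)]]) auto
qed

lemma c_dWphi2: "continuous_on SS (\<lambda>p. deriv W (\<phi> (snd p) (fst p)))"
  by (rule continuous_on_compose2[OF Wdc cs[OF regs(1)]]) auto

definition "gg \<tau> x = rho_tilde \<eta> y s x \<tau> * e_eps W \<epsilon> \<phi> x \<tau>"
definition "gg' \<tau> x = (rho_heat y s x \<tau> * ((real CARD('n) - 1) / (2 * (s - \<tau>)) - (norm (x - y))\<^sup>2 / (4 * (s - \<tau>)\<^sup>2)) * \<eta> (x - y))
    * e_eps W \<epsilon> \<phi> x \<tau>
  + rho_tilde \<eta> y s x \<tau> * (\<epsilon> * (\<Sum>i\<in>UNIV. pdx i \<phi> x \<tau> * pdt T (pdx i \<phi>) x \<tau>) + deriv W (\<phi> x \<tau>) * pdt T \<phi> x \<tau> / \<epsilon>)"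

lemma gg_deriv:
  assumes "\<tau> \<in> ball t dlm"
  shows "((\<lambda>\<tau>. gg \<tau> x) has_real_derivative gg' \<tau> x) (at \<tau>)"
proof -
  have \<tau>: "0 < \<tau>" "\<tau> < T" "\<tau> < s" using dlm(2)[OF assms] by auto
  have hphi: "((\<lambda>\<tau>. \<phi> x \<tau>) has_real_derivative pdt T \<phi> x \<tau>) (at \<tau>)"
    by (rule has_pdt_deriv[OF regs(6) \<tau>(1,2)])
  have hp: "((\<lambda>\<tau>. pdx i \<phi> x \<tau>) has_real_derivative pdt T (pdx i \<phi>) x \<tau>) (at \<tau>)" for i
    by (rule has_pdt_deriv[OF regs(8) \<tau>(1,2)])
  have ds: "((\<lambda>\<tau>. \<Sum>i\<in>UNIV. (pdx i \<phi> x \<tau>)\<^sup>2) has_real_derivative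
      (\<Sum>i\<in>UNIV. 2 * (pdx i \<phi> x \<tau> * pdt T (pdx i \<phi>) x \<tau>))) (at \<tau>)"
    by (rule DERIV_sum) (auto intro!: derivative_eq_intros hp)
  have dW: "((\<lambda>\<tau>. W (\<phi> x \<tau>)) has_real_derivative deriv W (\<phi> x \<tau>) * pdt T \<phi> x \<tau>) (at \<tau>)"
    using DERIV_chain2[OF Wd[rule_format] hphi] .
  have de: "((\<lambda>\<tau>. e_eps W \<epsilon> \<phi> x \<tau>) has_real_derivative
      (\<epsilon> * (\<Sum>i\<in>UNIV. pdx i \<phi> x \<tau> * pdt T (pdx i \<phi>) x \<tau>) + deriv W (\<phi> x \<tau>) * pdt T \<phi> x \<tau> / \<epsilon>)) (at \<tau>)"
  proof -
    have "((\<lambda>\<tau>. \<epsilon> * (\<Sum>i\<in>UNIV. (pdx i \<phi> x \<tau>)\<^sup>2) / 2 + W (\<phi> x \<tau>) / \<epsilon>) has_real_derivative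
      \<epsilon> * (\<Sum>i\<in>UNIV. 2 * (pdx i \<phi> x \<tau> * pdt T (pdx i \<phi>) x \<tau>)) / 2 + deriv W (\<phi> x \<tau>) * pdt T \<phi> x \<tau> / \<epsilon>) (at \<tau>)"
      by (rule DERIV_add[OF DERIV_cdivide[OF DERIV_cmult[OF ds]] DERIV_cdivide[OF dW]])
    thus ?thesis unfolding e_eps_def by (simp add: sum_distrib_left[symmetric])
  qed
  have dr: "((\<lambda>\<tau>. rho_tilde \<eta> y s x \<tau>) has_real_derivative
      rho_heat y s x \<tau> * ((real CARD('n) - 1) / (2 * (s - \<tau>)) - (norm (x - y))\<^sup>2 / (4 * (s - \<tau>)\<^sup>2)) * \<eta> (x - y)) (at \<tau>)"
    unfolding rho_tilde_def by (rule DERIV_cmult_right[OF rho_dt[OF \<tau>(3)]])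
  show ?thesis unfolding gg_def[abs_def] gg'_def using DERIV_mult[OF dr de] by (simp add: mult.commute)
qed

lemma c_gg': "continuous_on SS (\<lambda>(\<tau>, x). gg' \<tau> x)"
proof -
  have c_eta2: "continuous_on SS (\<lambda>p. \<eta> (snd p - y))"
    by (rule continuous_on_compose2[OF sm0]) (auto intro!: continuous_intros)
  have c_e2: "continuous_on SS (\<lambda>p. e_eps W \<epsilon> \<phi> (snd p) (fst p))"
    unfolding e_eps_def using eps
    by (intro continuous_intros cs[OF regs(1)] cs[OF regs(3)] c_Wphi2) auto
  have c_a: "continuous_on SS (\<lambda>p. (real CARD('n) - 1) / (2 * (s - fst p)) - (norm (snd p - y))\<^sup>2 / (4 * (s - fst p)\<^sup>2))"
    by (intro continuous_intros) (auto dest!: dlm(2))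
  have "continuous_on SS (\<lambda>p. (rho_heat y s (snd p) (fst p) * ((real CARD('n) - 1) / (2 * (s - fst p)) - (norm (snd p - y))\<^sup>2 / (4 * (s - fst p)\<^sup>2)) * \<eta> (snd p - y))
    * e_eps W \<epsilon> \<phi> (snd p) (fst p)
  + (rho_heat y s (snd p) (fst p) * \<eta> (snd p - y)) * (\<epsilon> * (\<Sum>i\<in>UNIV. pdx i \<phi> (snd p) (fst p) * pdt T (pdx i \<phi>) (snd p) (fst p)) + deriv W (\<phi> (snd p) (fst p)) * pdt T \<phi> (snd p) (fst p) / \<epsilon>))"
    using eps by (intro continuous_intros c_rho2 c_a c_eta2 c_e2 cs[OF regs(3)] cs[OF regs(7)] cs[OF regs(9)] c_dWphi2) auto
  thus ?thesis unfolding gg'_def rho_tilde_def split_beta .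
qed

lemma main_deriv:
  "((\<lambda>\<tau>. \<integral>x. rho_tilde \<eta> y s x \<tau> * e_eps W \<epsilon> \<phi> x \<tau> \<partial>lborel) has_real_derivative (\<integral>x. gg' t x \<partial>lborel)) (at t)"
proof -
  have "((\<lambda>\<tau>. \<integral>x. gg \<tau> x \<partial>lborel) has_real_derivative (\<integral>x. gg' t x \<partial>lborel)) (at t)"
  proof (rule DUI[where \<delta>=dlm and c=y and r="1/2"])
    show "0 < dlm" by (rule dlm(1))
    show "\<And>\<tau> x. x \<notin> cball y (1/2) \<Longrightarrow> gg \<tau> x = 0"
      unfolding gg_def rho_tilde_def using supp_hn out_ball unfolding hn_def by simp
    show "\<And>\<tau> x. \<tau> \<in> ball t dlm \<Longrightarrow> ((\<lambda>\<tau>. gg \<tau> x) has_real_derivative gg' \<tau> x) (at \<tau>)"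
      by (rule gg_deriv)
    show "continuous_on SS (\<lambda>(\<tau>, x). gg' \<tau> x)" by (rule c_gg')
    show "continuous_on UNIV (gg \<tau>)" if "\<tau> \<in> ball t dlm" for \<tau>
    proof -
      have \<tau>: "\<tau> \<in> {0..T}" using dlm_sub that by auto
      have "continuous_on UNIV (\<lambda>x. W (\<phi> x \<tau>))"
      proof -
        have "continuous_on UNIV W" using Wd by (meson DERIV_isCont continuous_at_imp_continuous_on)
        thus ?thesis by (rule continuous_on_compose2[OF _ cont_Q_slice[OF regs(1) \<tau>]]) auto
      qed
      thus ?thesis unfolding gg_def[abs_def] rho_tilde_def e_eps_def using eps
        by (intro continuous_intros rho_cont_x cont_Q_slice[OF regs(3) \<tau>]
            continuous_on_compose2[OF sm0, of UNIV "\<lambda>x. x - y"]) auto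
    qed
  qed
  thus ?thesis unfolding gg_def .
qed

end


lemma lin_aux:
  fixes ep vv G D X Y ft R Dl dW Rt ee S L S1 S2 :: real
  assumes d: "ep * vv * G = D" and e: "ep * X - Y = D"
    and f: "- ep * ft * (R * vv) = - ep * ft * R * Dl + R * (dW * ft / ep)"
    and g: "ep * S1 = R * (ep * S2)"
  shows "(Rt * ee + R * (ep * S2 + dW * ft / ep)) - (Rt * ee - ep * ft * (G + R * vv) - ep * vv * G - ep * S + L * ee)
     = ep * (S1 + ft * (G + R * Dl)) + (ep * S + ep * X) - (L * ee + Y)"
proof -
  define Q where "Q = dW * ft / ep"
  have f': "ep * ft * (R * vv) = ep * ft * R * Dl - R * Q" using f unfolding Q_def by linarith
  have 1: "Rt * ee + R * (ep * S2 + Q) - (Rt * ee - ep * ft * (G + R * vv) - ep * vv * G - ep * S + L * ee)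
      = R * (ep * S2) + R * Q + ep * ft * G + ep * ft * (R * vv) + ep * vv * G + ep * S - L * ee"
    by (simp add: algebra_simps)
  have 2: "ep * (S1 + ft * (G + R * Dl)) + (ep * S + ep * X) - (L * ee + Y)
      = ep * S1 + ep * ft * G + ep * ft * R * Dl + ep * S + ep * X - L * ee - Y"
    by (simp add: algebra_simps)
  show ?thesis unfolding Q_def[symmetric] 1 2 using d e g f' by linarith
qed

context setting
begin

definition "Rt x = r x * ((real CARD('n) - 1) / (2 * \<tau>0) - (norm (x - y))\<^sup>2 / (4 * \<tau>0\<^sup>2)) * hn x"
definition "vv x = (\<Sum>i\<in>UNIV. pp i i x) - dW x / \<epsilon>\<^sup>2"
definition "GG x = (\<Sum>j\<in>UNIV. R1 j x * p j x)"
definition "SS2 x = (\<Sum>i\<in>UNIV. \<Sum>j\<in>UNIV. R2 j i x * p i x * p j x)"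
definition "LL x = (\<Sum>j\<in>UNIV. R2 j j x)"
definition "PP x = Rt x * ee x - \<epsilon> * ft x * (GG x + R x * vv x) - \<epsilon> * vv x * GG x - \<epsilon> * SS2 x + LL x * ee x"

definition "Z1 i x = R x * p i x * q i x + (R1 i x * p i x + R x * pp i i x) * ft x"
definition "Z2 i j x = R2 j i x * (\<epsilon> * (p i x * p j x)) + R1 j x * (\<epsilon> * (pp i i x * p j x + p i x * pp j i x))"
definition "Z3 j x = R2 j j x * ee x + R1 j x * eej j x"
definition "ZZ x = \<epsilon> * (\<Sum>i\<in>UNIV. Z1 i x) + (\<Sum>j\<in>UNIV. \<Sum>i\<in>UNIV. Z2 i j x) - (\<Sum>j\<in>UNIV. Z3 j x)"

lemma gg'_t: "gg' t x = Rt x * ee x + R x * (\<epsilon> * (\<Sum>i\<in>UNIV. p i x * q i x) + dW x * ft x / \<epsilon>)"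
  unfolding gg'_def Rt_def R_def r_def hn_def ee_def p_def q_def dW_def ft_def rho_tilde_def \<tau>0_def
  by simp

lemma ident: "gg' t x - PP x = ZZ x"
proof -
  have a: "(\<Sum>i\<in>UNIV. Z1 i x) = (\<Sum>i\<in>UNIV. R x * p i x * q i x) + ft x * (GG x + R x * (\<Sum>i\<in>UNIV. pp i i x))"
    unfolding Z1_def GG_def by (simp add: sum.distrib sum_distrib_left sum_distrib_right algebra_simps)
  have b: "(\<Sum>j\<in>UNIV. \<Sum>i\<in>UNIV. Z2 i j x) = \<epsilon> * SS2 x
      + \<epsilon> * (\<Sum>j\<in>UNIV. R1 j x * ((\<Sum>i\<in>UNIV. pp i i x) * p j x + (\<Sum>i\<in>UNIV. p i x * pp j i x)))"
  proof -
    have "(\<Sum>j\<in>UNIV. \<Sum>i\<in>UNIV. Z2 i j x) = (\<Sum>j\<in>UNIV. \<Sum>i\<in>UNIV. \<epsilon> * (R2 j i x * p i x * p j x))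
       + (\<Sum>j\<in>UNIV. \<Sum>i\<in>UNIV. \<epsilon> * (R1 j x * (pp i i x * p j x + p i x * pp j i x)))"
      unfolding Z2_def by (simp add: sum.distrib algebra_simps)
    also have "(\<Sum>j\<in>UNIV. \<Sum>i\<in>UNIV. \<epsilon> * (R2 j i x * p i x * p j x)) = \<epsilon> * SS2 x"
      unfolding SS2_def sum_distrib_left by (rule sum.swap)
    also have "(\<Sum>j\<in>UNIV. \<Sum>i\<in>UNIV. \<epsilon> * (R1 j x * (pp i i x * p j x + p i x * pp j i x)))
        = \<epsilon> * (\<Sum>j\<in>UNIV. R1 j x * ((\<Sum>i\<in>UNIV. pp i i x) * p j x + (\<Sum>i\<in>UNIV. p i x * pp j i x)))"
      by (simp add: sum_distrib_left sum_distrib_right sum.distrib algebra_simps)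
    finally show ?thesis .
  qed
  have c: "(\<Sum>j\<in>UNIV. Z3 j x) = LL x * ee x
      + (\<Sum>j\<in>UNIV. R1 j x * (\<epsilon> * (\<Sum>i\<in>UNIV. p i x * pp j i x) + dW x * p j x / \<epsilon>))"
    unfolding Z3_def LL_def eej_def using pp_sym
    by (simp add: sum.distrib sum_distrib_right)
  have d: "\<epsilon> * vv x * GG x = (\<Sum>j\<in>UNIV. R1 j x * (\<epsilon> * (\<Sum>i\<in>UNIV. pp i i x) * p j x - dW x * p j x / \<epsilon>))"
  proof -
    have "\<epsilon> * vv x * GG x = (\<Sum>j\<in>UNIV. \<epsilon> * vv x * (R1 j x * p j x))"
      unfolding GG_def by (simp add: sum_distrib_left)
    also have "\<dots> = (\<Sum>j\<in>UNIV. R1 j x * (\<epsilon> * (\<Sum>i\<in>UNIV. pp i i x) * p j x - dW x * p j x / \<epsilon>))"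
    proof (rule sum.cong)
      fix j
      show "\<epsilon> * vv x * (R1 j x * p j x) = R1 j x * (\<epsilon> * (\<Sum>i\<in>UNIV. pp i i x) * p j x - dW x * p j x / \<epsilon>)"
        unfolding vv_def using eps by (simp add: field_simps power2_eq_square)
    qed simp
    finally show ?thesis .
  qed
  have e: "\<epsilon> * (\<Sum>j\<in>UNIV. R1 j x * ((\<Sum>i\<in>UNIV. pp i i x) * p j x + (\<Sum>i\<in>UNIV. p i x * pp j i x)))
      - (\<Sum>j\<in>UNIV. R1 j x * (\<epsilon> * (\<Sum>i\<in>UNIV. p i x * pp j i x) + dW x * p j x / \<epsilon>))
      = (\<Sum>j\<in>UNIV. R1 j x * (\<epsilon> * (\<Sum>i\<in>UNIV. pp i i x) * p j x - dW x * p j x / \<epsilon>))"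
    by (simp add: sum_distrib_left sum_subtractf[symmetric] algebra_simps)
  have f: "- \<epsilon> * ft x * (R x * vv x) = - \<epsilon> * ft x * R x * (\<Sum>i\<in>UNIV. pp i i x) + R x * (dW x * ft x / \<epsilon>)"
    unfolding vv_def using eps by (simp add: algebra_simps power2_eq_square)
  have g: "\<epsilon> * (\<Sum>i\<in>UNIV. R x * p i x * q i x) = R x * (\<epsilon> * (\<Sum>i\<in>UNIV. p i x * q i x))"
    by (simp add: sum_distrib_left algebra_simps)
  show ?thesis
    unfolding gg'_t ZZ_def a b c PP_def by (rule lin_aux[OF d e f g])
qed


lemma c_Rt: "continuous_on UNIV Rt"
  unfolding Rt_def[abs_def] using tau0 by (intro continuous_intros c_r c_hn) auto
lemma supp_Rt: "x \<notin> cball y (1/2) \<Longrightarrow> Rt x = 0"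
  unfolding Rt_def using supp_hn out_ball by simp

lemma int_gg': "integrable lborel (gg' t)"
proof -
  have "integrable lborel (\<lambda>x. Rt x * ee x + R x * (\<epsilon> * (\<Sum>i\<in>UNIV. p i x * q i x) + dW x * ft x / \<epsilon>))"
    by (rule int_cs) (use supp_Rt supp_R eps in \<open>auto intro!: continuous_intros c_Rt c_ee c_R c_p c_q c_dW c_ft\<close>)
  thus ?thesis using gg'_t by presburger
qed

lemma int_Z1: "integrable lborel (Z1 i)"
  unfolding Z1_def[abs_def]
  by (rule int_cs) (use supp_R supp_R1 in \<open>auto intro!: continuous_intros c_R c_R1 c_p c_pp c_q c_ft\<close>)
lemma int_Z2: "integrable lborel (Z2 i j)"
  unfolding Z2_def[abs_def]
  by (rule int_cs) (use supp_R2 supp_R1 in \<open>auto intro!: continuous_intros c_R2 c_R1 c_p c_pp\<close>)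
lemma int_Z3: "integrable lborel (Z3 j)"
  unfolding Z3_def[abs_def]
  by (rule int_cs) (use supp_R2 supp_R1 in \<open>auto intro!: continuous_intros c_R2 c_R1 c_ee c_eej\<close>)

lemma Z1_0: "(\<integral>x. Z1 i x \<partial>lborel) = 0" unfolding Z1_def by (rule I1)
lemma Z2_0: "(\<integral>x. Z2 i j x \<partial>lborel) = 0" unfolding Z2_def by (rule Z2)
lemma Z3_0: "(\<integral>x. Z3 j x \<partial>lborel) = 0" unfolding Z3_def by (rule Z3)

lemma int_ZZ: "integrable lborel ZZ" "(\<integral>x. ZZ x \<partial>lborel) = 0"
proof -
  have i1: "integrable lborel (\<lambda>x. \<epsilon> * (\<Sum>i\<in>UNIV. Z1 i x))"
    by (rule Bochner_Integration.integrable_mult_right, rule Bochner_Integration.integrable_sum, rule int_Z1)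
  have i2: "integrable lborel (\<lambda>x. \<Sum>j\<in>UNIV. \<Sum>i\<in>UNIV. Z2 i j x)"
    by (intro Bochner_Integration.integrable_sum int_Z2)
  have i3: "integrable lborel (\<lambda>x. \<Sum>j\<in>UNIV. Z3 j x)"
    by (intro Bochner_Integration.integrable_sum int_Z3)
  show "integrable lborel ZZ" unfolding ZZ_def[abs_def] by (intro Bochner_Integration.integrable_diff Bochner_Integration.integrable_add i1 i2 i3)
  have "(\<integral>x. ZZ x \<partial>lborel) = (\<integral>x. \<epsilon> * (\<Sum>i\<in>UNIV. Z1 i x) \<partial>lborel) + (\<integral>x. (\<Sum>j\<in>UNIV. \<Sum>i\<in>UNIV. Z2 i j x) \<partial>lborel)
      - (\<integral>x. (\<Sum>j\<in>UNIV. Z3 j x) \<partial>lborel)"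
    unfolding ZZ_def using i1 i2 i3 by simp
  also have "(\<integral>x. \<epsilon> * (\<Sum>i\<in>UNIV. Z1 i x) \<partial>lborel) = 0"
  proof -
    have "integrable lborel (\<lambda>x. \<Sum>i\<in>UNIV. Z1 i x)" by (intro Bochner_Integration.integrable_sum int_Z1)
    thus ?thesis using int_Z1 Z1_0 by (simp add: integral_sum)
  qed
  also have "(\<integral>x. (\<Sum>j\<in>UNIV. \<Sum>i\<in>UNIV. Z2 i j x) \<partial>lborel) = 0"
    using int_Z2 Z2_0 by (simp add: integral_sum integrable_sum)
  also have "(\<integral>x. (\<Sum>j\<in>UNIV. Z3 j x) \<partial>lborel) = 0"
    using int_Z3 Z3_0 by (simp add: integral_sum)
  finally show "(\<integral>x. ZZ x \<partial>lborel) = 0" by simp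
qed

lemma int_PP: "integrable lborel PP" "(\<integral>x. gg' t x \<partial>lborel) = (\<integral>x. PP x \<partial>lborel)"
proof -
  have eq: "PP = (\<lambda>x. gg' t x - ZZ x)" using ident by (intro ext) (metis add_diff_cancel_left' diff_add_cancel)
  show "integrable lborel PP" unfolding eq by (intro Bochner_Integration.integrable_diff int_gg' int_ZZ(1))
  show "(\<integral>x. gg' t x \<partial>lborel) = (\<integral>x. PP x \<partial>lborel)" unfolding eq using int_gg' int_ZZ by simp
qed

end


lemma core_ineq:
  fixes ep rr h tau e xi Pn W0 u2 b v A B Zp H :: real
  assumes ep: "ep > 0" and rr: "rr > 0" and h: "h \<ge> 0" and tau: "tau > 0"
    and e: "e = ep * Pn / 2 + W0" and xi: "xi = ep * Pn / 2 - W0" and W0: "W0 \<ge> 0" and Pn: "Pn \<ge> 0"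
    and u2: "u2 \<ge> 0" and bb: "b\<^sup>2 \<le> u2 * Pn"
    and A: "A = - rr * Zp / (2 * tau)" and H: "H = rr * (Zp\<^sup>2 / (4 * tau\<^sup>2) - Pn / (2 * tau))"
    and B0: "h = 0 \<Longrightarrow> B = 0"
  shows "h * rr * (- 1 / (2 * tau)) * e - ep * (v - b) * (h * A + rr * B + rr * h * v) - ep * v * (h * A + rr * B)
     - ep * (h * H + 2 * (A * B))
     \<le> rr * h * u2 * e / 2 + xi * (rr * h) / (2 * tau) + (if h > 0 then ep * rr * B\<^sup>2 / h else 0)"
proof (cases "h > 0")
  case False
  hence h0: "h = 0" using h by simp
  thus ?thesis using B0 by simp
next
  case True
  define rt where "rt = rr * h"
  have rt: "rt > 0" unfolding rt_def using rr True by simp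
  define G where "G = h * A + rr * B"
  define c where "c = (b * rt - 2 * G) / (2 * rt)"
  have s1: "- ep * (v - b) * (h * A + rr * B + rr * h * v) - ep * v * (h * A + rr * B)
      = - ep * rt * v\<^sup>2 + ep * v * (b * rt - 2 * G) + ep * b * G"
    unfolding G_def rt_def by (simp add: algebra_simps power2_eq_square)
  have s2: "- ep * rt * v\<^sup>2 + ep * v * (b * rt - 2 * G) = - ep * rt * (v - c)\<^sup>2 + ep * (b * rt - 2 * G)\<^sup>2 / (4 * rt)"
    unfolding c_def using rt by (simp add: field_simps power2_eq_square)
  have s3: "ep * (b * rt - 2 * G)\<^sup>2 / (4 * rt) + ep * b * G = ep * rt * b\<^sup>2 / 4 + ep * (G\<^sup>2 / rt)"
    using rt by (simp add: field_simps power2_eq_square)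
  have s4: "G\<^sup>2 / rt = h * A\<^sup>2 / rr + 2 * (A * B) + rr * B\<^sup>2 / h"
    unfolding G_def rt_def using rr True by (simp add: field_simps power2_eq_square)
  have s5: "h * A\<^sup>2 / rr - h * H = h * rr * Pn / (2 * tau)"
    unfolding A H using rr tau by (simp add: field_simps power2_eq_square)
  have s6: "h * rr * (- 1 / (2 * tau)) * e + ep * (h * rr * Pn / (2 * tau)) = xi * rt / (2 * tau)"
    unfolding e xi rt_def using tau by (simp add: field_simps)
  have key: "h * rr * (- 1 / (2 * tau)) * e - ep * (v - b) * (h * A + rr * B + rr * h * v) - ep * v * (h * A + rr * B)
     - ep * (h * H + 2 * (A * B))
     = - ep * rt * (v - c)\<^sup>2 + ep * rt * b\<^sup>2 / 4 + xi * rt / (2 * tau) + ep * rr * B\<^sup>2 / h"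
  proof -
    have "ep * (G\<^sup>2 / rt) - ep * (h * H + 2 * (A * B)) = ep * (h * A\<^sup>2 / rr - h * H) + ep * rr * B\<^sup>2 / h"
      unfolding s4 by (simp add: algebra_simps)
    also have "\<dots> = ep * (h * rr * Pn / (2 * tau)) + ep * rr * B\<^sup>2 / h" unfolding s5 ..
    finally have X: "ep * (G\<^sup>2 / rt) - ep * (h * H + 2 * (A * B)) = ep * (h * rr * Pn / (2 * tau)) + ep * rr * B\<^sup>2 / h" .
    show ?thesis using s1 s2 s3 X s6 by linarith
  qed
  have sq: "- ep * rt * (v - c)\<^sup>2 \<le> 0" using ep rt by simp
  have "ep * b\<^sup>2 \<le> ep * (u2 * Pn)" using bb ep by simp
  also have "\<dots> \<le> 2 * u2 * e" unfolding e using u2 W0 by (simp add: algebra_simps mult_left_mono)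
  finally have eb: "ep * b\<^sup>2 \<le> 2 * u2 * e" .
  have "rt / 4 * (ep * b\<^sup>2) \<le> rt / 4 * (2 * u2 * e)" by (rule mult_left_mono[OF eb]) (use rt in simp)
  hence F: "ep * rt * b\<^sup>2 / 4 \<le> rt * u2 * e / 2" by (simp add: algebra_simps)
  have "h * rr * (- 1 / (2 * tau)) * e - ep * (v - b) * (h * A + rr * B + rr * h * v) - ep * v * (h * A + rr * B)
     - ep * (h * H + 2 * (A * B)) \<le> rt * u2 * e / 2 + xi * rt / (2 * tau) + ep * rr * B\<^sup>2 / h"
    unfolding key using sq F by linarith
  thus ?thesis using True unfolding rt_def by simp
qed


lemma hh_aux: "c \<noteq> 0 \<Longrightarrow> e \<noteq> 0 \<Longrightarrow>
   r * (a * b / c - d / e) * p1 * p2 = r / c * ((b * p1) * (a * p2)) - r / e * (d * (p1 * p2))"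
  for r a b c d e p1 p2 :: real by (simp add: field_simps)

lemma dd_aux: "c \<noteq> 0 \<Longrightarrow> e \<noteq> 0 \<Longrightarrow> r * (a * a / c - 1 / e) = r / c * a\<^sup>2 - r / e"
  for r a c e :: real by (simp add: field_simps power2_eq_square)

lemma norm_sq_vec: "(norm (z::real^'n::finite))\<^sup>2 = (\<Sum>j\<in>UNIV. (z $ j)\<^sup>2)"
  unfolding power2_norm_eq_inner inner_vec_def by (simp add: power2_eq_square)

lemma double_sum_sq: fixes a :: "'n::finite \<Rightarrow> real" shows "(\<Sum>i\<in>(UNIV::'n::finite set). \<Sum>j\<in>UNIV. a i * a j) = (\<Sum>i\<in>UNIV. a i)\<^sup>2"
proof -
  have "(\<Sum>i\<in>UNIV. a i)\<^sup>2 = (\<Sum>i\<in>UNIV. a i) * (\<Sum>i\<in>UNIV. a i)" by (rule power2_eq_square)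
  also have "\<dots> = (\<Sum>i\<in>UNIV. \<Sum>j\<in>UNIV. a i * a j)" by (rule sum_product)
  finally show ?thesis by simp
qed

lemma double_sum_delta: fixes p :: "'n::finite \<Rightarrow> real" shows "(\<Sum>i\<in>(UNIV::'n::finite set). \<Sum>j\<in>UNIV. (if j = i then 1 else 0) * (p i * p j)) = (\<Sum>i\<in>UNIV. (p i)\<^sup>2)"
proof -
  have "(\<Sum>j\<in>UNIV. (if j = i then 1 else 0) * (p i * p j)) = (p i)\<^sup>2" for i :: 'n
  proof -
    have "(\<Sum>j\<in>UNIV. (if j = i then 1 else 0) * (p i * p j)) = (\<Sum>j\<in>UNIV. if j = i then p i * p j else 0)"
      by (rule sum.cong) auto
    also have "\<dots> = p i * p i" by (simp add: sum.delta)
    finally show ?thesis by (simp add: power2_eq_square)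
  qed
  thus ?thesis by simp
qed

context setting
begin

definition "Pn x = (\<Sum>i\<in>UNIV. (p i x)\<^sup>2)"
definition "Zp x = (\<Sum>j\<in>UNIV. (x - y) $ j * p j x)"
definition "AA x = (\<Sum>j\<in>UNIV. drho y s t j x * p j x)"
definition "BB x = (\<Sum>j\<in>UNIV. hn1 j x * p j x)"
definition "HH x = (\<Sum>i\<in>UNIV. \<Sum>j\<in>UNIV. ddrho y s t j i x * p i x * p j x)"
definition "HE x = (\<Sum>i\<in>UNIV. \<Sum>j\<in>UNIV. hn2 j i x * p i x * p j x)"
definition "CC x = (\<Sum>j\<in>UNIV. drho y s t j x * hn1 j x)"
definition "DE x = (\<Sum>j\<in>UNIV. hn2 j j x)"
definition "bb x = (\<Sum>i\<in>UNIV. u x t $ i * p i x)"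

lemma drho_eq: "drho y s t j x = - r x * (x - y) $ j / (2 * \<tau>0)"
  unfolding drho_def r_def \<tau>0_def by simp

lemma ddrho_eq: "ddrho y s t j i x = r x * ((x - y) $ j * (x - y) $ i / (4 * \<tau>0\<^sup>2) - (if j = i then 1 else 0) / (2 * \<tau>0))"
  unfolding ddrho_def r_def \<tau>0_def by simp

lemma AA_eq: "AA x = - r x * Zp x / (2 * \<tau>0)"
  unfolding AA_def Zp_def drho_eq by (simp add: sum_distrib_left sum_divide_distrib algebra_simps)

lemma HH_eq: "HH x = r x * ((Zp x)\<^sup>2 / (4 * \<tau>0\<^sup>2) - Pn x / (2 * \<tau>0))"
proof -
  have "HH x = (\<Sum>i\<in>UNIV. \<Sum>j\<in>UNIV. r x / (4 * \<tau>0\<^sup>2) * (((x - y) $ i * p i x) * ((x - y) $ j * p j x))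
      - r x / (2 * \<tau>0) * ((if j = i then 1 else 0) * (p i x * p j x)))"
    unfolding HH_def ddrho_eq by (intro sum.cong refl hh_aux) (use tau0 in auto)
  also have "\<dots> = r x / (4 * \<tau>0\<^sup>2) * (\<Sum>i\<in>UNIV. \<Sum>j\<in>UNIV. ((x - y) $ i * p i x) * ((x - y) $ j * p j x))
      - r x / (2 * \<tau>0) * (\<Sum>i\<in>UNIV. \<Sum>j\<in>UNIV. (if j = i then 1 else 0) * (p i x * p j x))"
    by (simp add: sum_subtractf sum_distrib_left)
  also have "\<dots> = r x / (4 * \<tau>0\<^sup>2) * (Zp x)\<^sup>2 - r x / (2 * \<tau>0) * Pn x"
    unfolding double_sum_sq[of "\<lambda>i. (x - y) $ i * p i x"] double_sum_delta[of "\<lambda>i. p i x"] Zp_def Pn_def ..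
  finally show ?thesis by (simp add: algebra_simps)
qed

lemma DD_eq: "(\<Sum>j\<in>UNIV. ddrho y s t j j x) = r x * ((norm (x - y))\<^sup>2 / (4 * \<tau>0\<^sup>2) - real CARD('n) / (2 * \<tau>0))"
proof -
  have "(\<Sum>j\<in>UNIV. ddrho y s t j j x) = (\<Sum>j\<in>UNIV. r x / (4 * \<tau>0\<^sup>2) * ((x - y) $ j)\<^sup>2 - r x / (2 * \<tau>0))"
    unfolding ddrho_eq by (intro sum.cong refl) (use tau0 dd_aux in auto)
  also have "\<dots> = r x / (4 * \<tau>0\<^sup>2) * (\<Sum>j\<in>UNIV. ((x - y) $ j)\<^sup>2) - real CARD('n) * (r x / (2 * \<tau>0))"
    by (simp only: sum_subtractf sum_distrib_left[symmetric] sum_constant)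
  also have "\<dots> = r x / (4 * \<tau>0\<^sup>2) * (norm (x - y))\<^sup>2 - real CARD('n) * (r x / (2 * \<tau>0))"
    unfolding norm_sq_vec[of "x - y"] ..
  finally show ?thesis by (simp add: algebra_simps)
qed

lemma GG_eq: "GG x = hn x * AA x + r x * BB x"
  unfolding GG_def AA_def BB_def R1_def by (simp add: sum.distrib sum_distrib_left algebra_simps)

lemma SS2_eq: "SS2 x = hn x * HH x + 2 * (AA x * BB x) + r x * HE x"
proof -
  have "SS2 x = (\<Sum>i\<in>UNIV. \<Sum>j\<in>UNIV. hn x * (ddrho y s t j i x * p i x * p j x)
     + (drho y s t j x * p j x) * (hn1 i x * p i x) + (drho y s t i x * p i x) * (hn1 j x * p j x)
     + r x * (hn2 j i x * p i x * p j x))"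
    unfolding SS2_def R2_def by (intro sum.cong refl) (simp add: algebra_simps)
  also have "\<dots> = hn x * HH x + (\<Sum>i\<in>UNIV. \<Sum>j\<in>UNIV. (drho y s t j x * p j x) * (hn1 i x * p i x))
      + (\<Sum>i\<in>UNIV. \<Sum>j\<in>UNIV. (drho y s t i x * p i x) * (hn1 j x * p j x)) + r x * HE x"
    unfolding HH_def HE_def by (simp add: sum.distrib sum_distrib_left)
  also have "(\<Sum>i\<in>UNIV. \<Sum>j\<in>UNIV. (drho y s t j x * p j x) * (hn1 i x * p i x)) = AA x * BB x"
    unfolding AA_def BB_def sum_product by (subst sum.swap) simp
  also have "(\<Sum>i\<in>UNIV. \<Sum>j\<in>UNIV. (drho y s t i x * p i x) * (hn1 j x * p j x)) = AA x * BB x"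
    unfolding AA_def BB_def sum_product ..
  finally show ?thesis by simp
qed

lemma LL_eq: "LL x = hn x * (\<Sum>j\<in>UNIV. ddrho y s t j j x) + 2 * CC x + r x * DE x"
  unfolding LL_def R2_def CC_def DE_def by (simp add: sum.distrib sum_distrib_left algebra_simps)

lemma ft_eq: "ft x = vv x - bb x"
proof -
  have "pdt T \<phi> x t + (\<Sum>i\<in>UNIV. u x t $ i * pdx i \<phi> x t)
              = (\<Sum>i\<in>UNIV. pdx i (pdx i \<phi>) x t) - deriv W (\<phi> x t) / \<epsilon>\<^sup>2"
    using pde tin by blast
  thus ?thesis unfolding ft_def vv_def bb_def p_def pp_def dW_def by linarith
qed

end


lemma split_aux:
  fixes ep ft GG R vv Rt ee S LL hn r A B H HE CC DE DD a1 a2 N nn tt b :: real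
  assumes "GG = hn * A + r * B" "R = r * hn" "S = hn * H + 2 * (A * B) + r * HE"
    "LL = hn * DD + 2 * CC + r * DE" "ft = vv - b"
    "Rt = r * ((nn - 1) / (2 * tt) - N / (4 * tt\<^sup>2)) * hn" "DD = r * (N / (4 * tt\<^sup>2) - nn / (2 * tt))"
  shows "Rt * ee - ep * ft * (GG + R * vv) - ep * vv * GG - ep * S + LL * ee
    = (hn * r * (- 1 / (2 * tt)) * ee - ep * (vv - b) * (hn * A + r * B + r * hn * vv) - ep * vv * (hn * A + r * B)
       - ep * (hn * H + 2 * (A * B))) + (- ep * (r * HE) + (2 * CC + r * DE) * ee)"
proof -
  have "Rt * ee + hn * DD * ee = hn * r * (- 1 / (2 * tt)) * ee"
    unfolding assms(6,7) by (simp add: algebra_simps add_divide_distrib[symmetric] diff_divide_distrib[symmetric])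
  thus ?thesis unfolding assms(1-5) by (simp add: algebra_simps)
qed

context setting
begin

lemma PP_split: "PP x = (hn x * r x * (- 1 / (2 * \<tau>0)) * ee x - \<epsilon> * (vv x - bb x) * (hn x * AA x + r x * BB x + r x * hn x * vv x)
     - \<epsilon> * vv x * (hn x * AA x + r x * BB x) - \<epsilon> * (hn x * HH x + 2 * (AA x * BB x)))
   + (- \<epsilon> * (r x * HE x) + (2 * CC x + r x * DE x) * ee x)"
  unfolding PP_def
  by (rule split_aux[OF GG_eq R_def SS2_eq LL_eq ft_eq Rt_def DD_eq])


lemma ee_eq: "ee x = \<epsilon> * Pn x / 2 + W (\<phi> x t) / \<epsilon>"
  unfolding ee_def e_eps_def Pn_def p_def ..
lemma xi_eq: "xi_eps W \<epsilon> \<phi> x t = \<epsilon> * Pn x / 2 - W (\<phi> x t) / \<epsilon>"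
  unfolding xi_eps_def Pn_def p_def ..
lemma Pn_nn: "Pn x \<ge> 0" unfolding Pn_def by (simp add: sum_nonneg)
lemma W0_nn: "W (\<phi> x t) / \<epsilon> \<ge> 0" using Wnn eps by simp
lemma ee_nn: "ee x \<ge> 0" unfolding ee_eq using Pn_nn W0_nn eps by simp
lemma epn: "\<epsilon> * Pn x \<le> 2 * ee x"
proof -
  have "2 * ee x = \<epsilon> * Pn x + 2 * (W (\<phi> x t) / \<epsilon>)" unfolding ee_eq by (simp add: algebra_simps)
  thus ?thesis using W0_nn[of x] by linarith
qed
lemma r_pos: "r x > 0" unfolding r_def by (rule rho_pos[OF ts])
lemma hn_nn: "hn x \<ge> 0" unfolding hn_def by (rule eta_nonneg)

lemma bb_bound: "(bb x)\<^sup>2 \<le> (norm (u x t))\<^sup>2 * Pn x"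
  unfolding bb_def Pn_def norm_sq_vec by (rule Cauchy_Schwarz_ineq_sum)

lemma hn1_sq: "(hn1 j x)\<^sup>2 \<le> 2 * (M2 + 1) * hn x"
  unfolding hn1_def hn_def by (rule glaeser[OF M2])

lemma B0: "hn x = 0 \<Longrightarrow> BB x = 0"
proof -
  assume h: "hn x = 0"
  have "hn1 j x = 0" for j using hn1_sq[of j x] h by simp
  thus ?thesis unfolding BB_def by simp
qed

lemma main_pt: "PP x \<le> r x * hn x * (norm (u x t))\<^sup>2 * ee x / 2 + xi_eps W \<epsilon> \<phi> x t * (r x * hn x) / (2 * \<tau>0)
   + ((if hn x > 0 then \<epsilon> * r x * (BB x)\<^sup>2 / hn x else 0) + (- \<epsilon> * (r x * HE x) + (2 * CC x + r x * DE x) * ee x))"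
proof -
  have "hn x * r x * (- 1 / (2 * \<tau>0)) * ee x - \<epsilon> * (vv x - bb x) * (hn x * AA x + r x * BB x + r x * hn x * vv x)
     - \<epsilon> * vv x * (hn x * AA x + r x * BB x) - \<epsilon> * (hn x * HH x + 2 * (AA x * BB x))
     \<le> r x * hn x * (norm (u x t))\<^sup>2 * ee x / 2 + xi_eps W \<epsilon> \<phi> x t * (r x * hn x) / (2 * \<tau>0)
       + (if hn x > 0 then \<epsilon> * r x * (BB x)\<^sup>2 / hn x else 0)"
    by (rule core_ineq[OF eps r_pos hn_nn tau0 ee_eq xi_eq W0_nn Pn_nn _ bb_bound AA_eq HH_eq B0]) simp
  thus ?thesis unfolding PP_split by linarith
qed

end


context setting
begin

definition "nn = real CARD('n)"
definition "MG = 2 * nn * (M2 + 1)"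
definition "K0 = 2 * MG + nn * M1 + 3 * nn * M2"
definition "cc2 = K0 * KB CARD('n)"

lemma M1nn: "M1 \<ge> 0" using M1 by (meson abs_ge_zero order_trans)
lemma M2nn: "M2 \<ge> 0" using M2 by (meson abs_ge_zero order_trans)
lemma nn1: "nn \<ge> 1" unfolding nn_def by (simp add: Suc_leI)
lemma MGnn: "MG \<ge> 0" unfolding MG_def using nn1 M2nn by simp
lemma K0nn: "K0 \<ge> 0" unfolding K0_def using MGnn nn1 M1nn M2nn by simp
lemma KBnn: "KB n \<ge> 0" unfolding KB_def by simp
lemma cc2nn: "cc2 \<ge> 0" unfolding cc2_def using K0nn KBnn by simp

lemma Q1: "(if hn x > 0 then \<epsilon> * r x * (BB x)\<^sup>2 / hn x else 0) \<le> 2 * MG * r x * ee x"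
proof (cases "hn x > 0")
  case True
  have "(BB x)\<^sup>2 \<le> (\<Sum>j\<in>UNIV. (hn1 j x)\<^sup>2) * Pn x"
    unfolding BB_def Pn_def by (rule Cauchy_Schwarz_ineq_sum)
  also have "(\<Sum>j\<in>UNIV. (hn1 j x)\<^sup>2) \<le> (\<Sum>j\<in>(UNIV::'n set). 2 * (M2 + 1) * hn x)"
    by (rule sum_mono) (rule hn1_sq)
  also have "\<dots> = MG * hn x" unfolding MG_def nn_def by simp
  finally have "(BB x)\<^sup>2 \<le> MG * hn x * Pn x" using Pn_nn by (simp add: mult_right_mono)
  hence "(BB x)\<^sup>2 / hn x \<le> MG * Pn x" using True by (simp add: field_simps)
  moreover have "0 \<le> \<epsilon> * r x" using eps r_pos[of x] by simp
  ultimately have "\<epsilon> * r x * ((BB x)\<^sup>2 / hn x) \<le> \<epsilon> * r x * (MG * Pn x)"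
    by (rule mult_left_mono)
  also have "\<dots> = r x * MG * (\<epsilon> * Pn x)" by (simp add: algebra_simps)
  also have "\<dots> \<le> r x * MG * (2 * ee x)" using epn[of x] r_pos[of x] MGnn by (intro mult_left_mono) auto
  finally show ?thesis using True by (simp add: algebra_simps)
next
  case False
  thus ?thesis using MGnn r_pos[of x] ee_nn[of x] by simp
qed

lemma sum_abs_sq: "(\<Sum>i\<in>UNIV. \<bar>p i x\<bar>)\<^sup>2 \<le> nn * Pn x"
proof -
  have "(\<Sum>i\<in>UNIV. 1 * \<bar>p i x\<bar>)\<^sup>2 \<le> (\<Sum>i\<in>(UNIV::'n set). 1\<^sup>2) * (\<Sum>i\<in>UNIV. \<bar>p i x\<bar>\<^sup>2)"
    by (rule Cauchy_Schwarz_ineq_sum)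
  thus ?thesis unfolding nn_def Pn_def by simp
qed

lemma Q2: "- \<epsilon> * (r x * HE x) \<le> 2 * nn * M2 * r x * ee x"
proof -
  have "\<bar>HE x\<bar> \<le> (\<Sum>i\<in>UNIV. \<Sum>j\<in>UNIV. \<bar>hn2 j i x * p i x * p j x\<bar>)"
    unfolding HE_def by (rule order_trans[OF sum_abs sum_mono[OF sum_abs]])
  also have "\<dots> \<le> (\<Sum>i\<in>UNIV. \<Sum>j\<in>UNIV. M2 * (\<bar>p i x\<bar> * \<bar>p j x\<bar>))"
  proof (intro sum_mono)
    fix i j
    have "\<bar>hn2 j i x\<bar> \<le> M2" unfolding hn2_def using M2 by blast
    thus "\<bar>hn2 j i x * p i x * p j x\<bar> \<le> M2 * (\<bar>p i x\<bar> * \<bar>p j x\<bar>)"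
      by (simp add: abs_mult mult.assoc mult_right_mono)
  qed
  also have "\<dots> = M2 * (\<Sum>i\<in>UNIV. \<Sum>j\<in>UNIV. \<bar>p i x\<bar> * \<bar>p j x\<bar>)"
    by (simp add: sum_distrib_left)
  also have "\<dots> = M2 * (\<Sum>i\<in>UNIV. \<bar>p i x\<bar>)\<^sup>2"
    using double_sum_sq[of "\<lambda>i. \<bar>p i x\<bar>"] by simp
  also have "\<dots> \<le> M2 * (nn * Pn x)" by (rule mult_left_mono[OF sum_abs_sq M2nn])
  finally have HE: "\<bar>HE x\<bar> \<le> M2 * (nn * Pn x)" .
  have "- \<epsilon> * (r x * HE x) \<le> \<epsilon> * r x * \<bar>HE x\<bar>"
  proof -
    have erx: "0 \<le> \<epsilon> * r x" using eps r_pos[of x] by simp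
    have "- HE x \<le> \<bar>HE x\<bar>" by simp
    hence "\<epsilon> * r x * (- HE x) \<le> \<epsilon> * r x * \<bar>HE x\<bar>" by (rule mult_left_mono[OF _ erx])
    thus ?thesis by simp
  qed
  also have "\<dots> \<le> \<epsilon> * r x * (M2 * (nn * Pn x))" using eps r_pos[of x] HE by (intro mult_left_mono) auto
  also have "\<dots> = nn * M2 * r x * (\<epsilon> * Pn x)" by (simp add: algebra_simps)
  also have "\<dots> \<le> nn * M2 * r x * (2 * ee x)"
    using epn nn1 M2nn r_pos[of x] by (intro mult_left_mono) auto
  finally show ?thesis by (simp add: algebra_simps)
qed


lemma Q3: "norm (x - y) < 1/2 \<Longrightarrow> 2 * CC x * ee x \<le> nn * M1 * r x / (2 * \<tau>0) * ee x"
proof -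
  assume d: "norm (x - y) < 1/2"
  have "\<bar>CC x\<bar> \<le> (\<Sum>j\<in>UNIV. \<bar>drho y s t j x * hn1 j x\<bar>)" unfolding CC_def by (rule sum_abs)
  also have "\<dots> \<le> (\<Sum>j\<in>(UNIV::'n set). r x / (4 * \<tau>0) * M1)"
  proof (rule sum_mono)
    fix j
    have "\<bar>(x - y) $ j\<bar> \<le> norm (x - y)" by (rule component_le_norm_cart)
    hence zj: "\<bar>(x - y) $ j\<bar> \<le> 1/2" using d by linarith
    have "\<bar>drho y s t j x\<bar> = r x * \<bar>(x - y) $ j\<bar> / (2 * \<tau>0)"
      unfolding drho_eq using r_pos[of x] tau0 by (simp add: abs_mult abs_divide)
    also have "\<dots> \<le> r x * (1/2) / (2 * \<tau>0)"
      using zj r_pos[of x] tau0 by (intro divide_right_mono mult_left_mono) auto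
    finally have a: "\<bar>drho y s t j x\<bar> \<le> r x / (4 * \<tau>0)" by simp
    have b: "\<bar>hn1 j x\<bar> \<le> M1" unfolding hn1_def using M1 by blast
    show "\<bar>drho y s t j x * hn1 j x\<bar> \<le> r x / (4 * \<tau>0) * M1"
      unfolding abs_mult by (rule mult_mono[OF a b]) (use r_pos[of x] tau0 in auto)
  qed
  also have "\<dots> = nn * M1 * r x / (4 * \<tau>0)" unfolding nn_def by simp
  finally have C: "\<bar>CC x\<bar> \<le> nn * M1 * r x / (4 * \<tau>0)" .
  have "2 * CC x * ee x \<le> 2 * \<bar>CC x\<bar> * ee x" using ee_nn[of x] by (intro mult_right_mono) auto
  also have "\<dots> \<le> 2 * (nn * M1 * r x / (4 * \<tau>0)) * ee x"
  proof (rule mult_right_mono)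
    show "2 * \<bar>CC x\<bar> \<le> 2 * (nn * M1 * r x / (4 * \<tau>0))" using C by linarith
  qed (use ee_nn[of x] in simp)
  also have "\<dots> = nn * M1 * r x / (2 * \<tau>0) * ee x" by simp
  finally show ?thesis .
qed

lemma Q4: "r x * DE x * ee x \<le> nn * M2 * r x * ee x"
proof -
  have "\<bar>DE x\<bar> \<le> (\<Sum>j\<in>UNIV. \<bar>hn2 j j x\<bar>)" unfolding DE_def by (rule sum_abs)
  also have "\<dots> \<le> (\<Sum>j\<in>(UNIV::'n set). M2)" by (rule sum_mono) (use M2 in \<open>auto simp: hn2_def\<close>)
  also have "\<dots> = nn * M2" unfolding nn_def by simp
  finally have D: "DE x \<le> nn * M2" by simp
  have "r x * ee x * DE x \<le> r x * ee x * (nn * M2)"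
    using D r_pos[of x] ee_nn[of x] by (intro mult_left_mono) auto
  thus ?thesis by (simp add: algebra_simps)
qed

lemma r_kernel: "norm (x - y) \<ge> 1/4 \<Longrightarrow> (1 + 1 / \<tau>0) * r x \<le> KB CARD('n) * exp (- 1 / (128 * \<tau>0))"
proof -
  assume d: "norm (x - y) \<ge> 1/4"
  define P where "P = (4 * pi * \<tau>0) powr (- (real CARD('n) - 1) / 2)"
  have r: "r x = P * exp (- (norm (x - y))\<^sup>2 / (4 * \<tau>0))" unfolding r_def rho_heat_def P_def \<tau>0_def ..
  have "(1/4)\<^sup>2 \<le> (norm (x - y))\<^sup>2" using d by (intro power_mono) auto
  hence "- (norm (x - y))\<^sup>2 / (4 * \<tau>0) \<le> - (1/16) / (4 * \<tau>0)" using tau0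
    by (intro divide_right_mono) (auto simp: power2_eq_square)
  hence "exp (- (norm (x - y))\<^sup>2 / (4 * \<tau>0)) \<le> exp (- 1 / (64 * \<tau>0))" by simp
  hence "r x \<le> P * exp (- 1 / (64 * \<tau>0))" unfolding r P_def by (intro mult_left_mono) auto
  hence "(1 + 1 / \<tau>0) * r x \<le> (1 + 1 / \<tau>0) * (P * exp (- 1 / (64 * \<tau>0)))"
    using tau0 by (intro mult_left_mono) auto
  also have "\<dots> \<le> KB CARD('n) * exp (- 1 / (128 * \<tau>0))"
    using kernel_bound[OF tau0, of "CARD('n)"] unfolding P_def by (simp add: Suc_leI mult.assoc)
  finally show ?thesis .
qed

lemma Ebound: "(if hn x > 0 then \<epsilon> * r x * (BB x)\<^sup>2 / hn x else 0) + (- \<epsilon> * (r x * HE x) + (2 * CC x + r x * DE x) * ee x)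
    \<le> cc2 * exp (- 1 / (128 * \<tau>0)) * (indicator (ball y (1/2)) x * ee x)"
proof (cases "norm (x - y) < 1/4 \<or> norm (x - y) \<ge> 1/2")
  case True
  have h1: "hn1 j x = 0" for j unfolding hn1_def using deriv_vanish(1)[OF True] .
  have h2: "hn2 i j x = 0" for i j unfolding hn2_def using deriv_vanish(2)[OF True] .
  have "BB x = 0" "HE x = 0" "CC x = 0" "DE x = 0" unfolding BB_def HE_def CC_def DE_def using h1 h2 by auto
  hence "(if hn x > 0 then \<epsilon> * r x * (BB x)\<^sup>2 / hn x else 0) + (- \<epsilon> * (r x * HE x) + (2 * CC x + r x * DE x) * ee x) = 0"
    by simp
  moreover have "0 \<le> cc2 * exp (- 1 / (128 * \<tau>0)) * (indicator (ball y (1/2)) x * ee x)"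
    using cc2nn ee_nn[of x] by simp
  ultimately show ?thesis by simp
next
  case False
  hence d: "norm (x - y) \<ge> 1/4" "norm (x - y) < 1/2" by auto
  have ind: "indicator (ball y (1/2)) x = (1::real)"
    using d(2) by (simp add: dist_norm norm_minus_commute)
  have sum: "(if hn x > 0 then \<epsilon> * r x * (BB x)\<^sup>2 / hn x else 0) + (- \<epsilon> * (r x * HE x) + (2 * CC x + r x * DE x) * ee x)
     \<le> 2 * MG * r x * ee x + 2 * nn * M2 * r x * ee x + nn * M1 * r x / (2 * \<tau>0) * ee x + nn * M2 * r x * ee x"
    using Q1[of x] Q2[of x] Q3[OF d(2)] Q4[of x] by (simp add: algebra_simps)
  also have "\<dots> = (r x * ee x) * (2 * MG + 3 * nn * M2 + nn * M1 / (2 * \<tau>0))"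
    by (simp add: algebra_simps)
  also have "\<dots> \<le> (r x * ee x) * (K0 * (1 + 1 / \<tau>0))"
  proof (rule mult_left_mono)
    have "nn * M1 / (2 * \<tau>0) \<le> nn * M1 / \<tau>0" using tau0 nn1 M1nn by (intro divide_left_mono) auto
    moreover have "nn * M1 / \<tau>0 \<le> K0 / \<tau>0" unfolding K0_def using tau0 MGnn nn1 M2nn
      by (intro divide_right_mono) auto
    moreover have "2 * MG + 3 * nn * M2 \<le> K0" unfolding K0_def using nn1 M1nn by simp
    moreover have "K0 * (1 + 1 / \<tau>0) = K0 + K0 / \<tau>0" by (simp add: algebra_simps)
    ultimately show "2 * MG + 3 * nn * M2 + nn * M1 / (2 * \<tau>0) \<le> K0 * (1 + 1 / \<tau>0)"
      by linarith
    show "0 \<le> r x * ee x" using r_pos[of x] ee_nn[of x] by simp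
  qed
  also have "\<dots> = K0 * ee x * ((1 + 1 / \<tau>0) * r x)" by (simp add: algebra_simps)
  also have "\<dots> \<le> K0 * ee x * (KB CARD('n) * exp (- 1 / (128 * \<tau>0)))"
    using r_kernel[OF d(1)] K0nn ee_nn[of x] by (intro mult_left_mono) auto
  also have "\<dots> = cc2 * exp (- 1 / (128 * \<tau>0)) * (indicator (ball y (1/2)) x * ee x)"
    unfolding ind cc2_def by (simp add: algebra_simps)
  finally show ?thesis .
qed

end


context setting
begin

lemma rt_eq: "rho_tilde \<eta> y s x t = r x * hn x"
  unfolding rho_tilde_def r_def hn_def ..

lemma c_u2: "continuous_on UNIV (\<lambda>x. (norm (u x t))\<^sup>2)"
proof -
  have ci: "continuous_on UNIV (\<lambda>x. u x t $ i)" for i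
  proof -
    have "continuous_on UNIV (\<lambda>x. (\<lambda>z::(real^'n) \<times> real. u (fst z) (snd z) $ i) (x, t))"
      by (rule continuous_on_compose2[OF u_cont[rule_format, of i]]) (auto intro!: continuous_intros)
    thus ?thesis by simp
  qed
  have "continuous_on UNIV (\<lambda>x. \<Sum>i\<in>UNIV. (u x t $ i)\<^sup>2)"
    by (rule continuous_on_sum) (rule continuous_on_power[OF ci])
  thus ?thesis unfolding norm_sq_vec .
qed

lemma c_xi: "continuous_on UNIV (\<lambda>x. xi_eps W \<epsilon> \<phi> x t)"
  unfolding xi_eps_def p_def[symmetric] by (intro continuous_intros c_p c_W) (use eps in auto)

lemma pt_bound: "PP x \<le> (1/2) * (rho_tilde \<eta> y s x t * (norm (u x t))\<^sup>2 * e_eps W \<epsilon> \<phi> x t)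
    + 1 / (2 * (s - t)) * (xi_eps W \<epsilon> \<phi> x t * rho_tilde \<eta> y s x t)
    + cc2 * exp (- 1 / (128 * (s - t))) * (indicator (ball y (1/2)) x * e_eps W \<epsilon> \<phi> x t)"
proof -
  have "PP x \<le> r x * hn x * (norm (u x t))\<^sup>2 * ee x / 2 + xi_eps W \<epsilon> \<phi> x t * (r x * hn x) / (2 * \<tau>0)
     + cc2 * exp (- 1 / (128 * \<tau>0)) * (indicator (ball y (1/2)) x * ee x)"
    using main_pt[of x] Ebound[of x] by linarith
  thus ?thesis unfolding rt_eq ee_def[symmetric] \<tau>0_def[symmetric] by simp
qed

lemma final_loc: "\<exists>D. ((\<lambda>\<tau>. \<integral>x. rho_tilde \<eta> y s x \<tau> * e_eps W \<epsilon> \<phi> x \<tau> \<partial>lborel) has_real_derivative D) (at t)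
   \<and> D \<le> (1/2) * (\<integral>x. rho_tilde \<eta> y s x t * (norm (u x t))\<^sup>2 * e_eps W \<epsilon> \<phi> x t \<partial>lborel)
      + 1 / (2 * (s - t)) * (\<integral>x. xi_eps W \<epsilon> \<phi> x t * rho_tilde \<eta> y s x t \<partial>lborel)
      + cc2 * exp (- 1 / (128 * (s - t))) * (\<integral>x\<in>ball y (1/2). e_eps W \<epsilon> \<phi> x t \<partial>lborel)"
proof (intro exI conjI)
  show "((\<lambda>\<tau>. \<integral>x. rho_tilde \<eta> y s x \<tau> * e_eps W \<epsilon> \<phi> x \<tau> \<partial>lborel) has_real_derivative (\<integral>x. gg' t x \<partial>lborel)) (at t)"
    by (rule main_deriv)
  have supp_rt: "rho_tilde \<eta> y s x t = 0" if "x \<notin> cball y (1/2)" for x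
    unfolding rt_eq using supp_hn[OF out_ball[OF that]] by simp
  have c_rt: "continuous_on UNIV (\<lambda>x. rho_tilde \<eta> y s x t)" unfolding rt_eq by (intro continuous_intros c_r c_hn)
  have c_e: "continuous_on UNIV (\<lambda>x. e_eps W \<epsilon> \<phi> x t)" using c_ee unfolding ee_def[abs_def] .
  have i1: "integrable lborel (\<lambda>x. rho_tilde \<eta> y s x t * (norm (u x t))\<^sup>2 * e_eps W \<epsilon> \<phi> x t)"
    by (rule int_cs) (use supp_rt in \<open>auto intro!: continuous_intros c_rt c_u2 c_e\<close>)
  have i2: "integrable lborel (\<lambda>x. xi_eps W \<epsilon> \<phi> x t * rho_tilde \<eta> y s x t)"
    by (rule int_cs) (use supp_rt in \<open>auto intro!: continuous_intros c_rt c_xi\<close>)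
  have "set_integrable lborel (cball y (1/2)) (\<lambda>x. e_eps W \<epsilon> \<phi> x t)"
    unfolding set_integrable_def
    by (rule borel_integrable_compact) (auto intro: continuous_on_subset[OF c_e])
  hence "set_integrable lborel (ball y (1/2)) (\<lambda>x. e_eps W \<epsilon> \<phi> x t)"
    by (rule set_integrable_subset) auto
  hence i3: "integrable lborel (\<lambda>x. indicator (ball y (1/2)) x * e_eps W \<epsilon> \<phi> x t)"
    unfolding set_integrable_def by simp
  define c3 where "c3 = cc2 * exp (- 1 / (128 * (s - t)))"
  have iQ: "integrable lborel (\<lambda>x. (1/2) * (rho_tilde \<eta> y s x t * (norm (u x t))\<^sup>2 * e_eps W \<epsilon> \<phi> x t)
    + 1 / (2 * (s - t)) * (xi_eps W \<epsilon> \<phi> x t * rho_tilde \<eta> y s x t)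
    + c3 * (indicator (ball y (1/2)) x * e_eps W \<epsilon> \<phi> x t))"
    using i1 i2 i3 by auto
  have "(\<integral>x. gg' t x \<partial>lborel) = (\<integral>x. PP x \<partial>lborel)" by (rule int_PP(2))
  also have "\<dots> \<le> (\<integral>x. (1/2) * (rho_tilde \<eta> y s x t * (norm (u x t))\<^sup>2 * e_eps W \<epsilon> \<phi> x t)
    + 1 / (2 * (s - t)) * (xi_eps W \<epsilon> \<phi> x t * rho_tilde \<eta> y s x t)
    + c3 * (indicator (ball y (1/2)) x * e_eps W \<epsilon> \<phi> x t) \<partial>lborel)"
    by (rule integral_mono[OF int_PP(1) iQ]) (use pt_bound in \<open>simp add: c3_def\<close>)
  also have "\<dots> = (1/2) * (\<integral>x. rho_tilde \<eta> y s x t * (norm (u x t))\<^sup>2 * e_eps W \<epsilon> \<phi> x t \<partial>lborel)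
      + 1 / (2 * (s - t)) * (\<integral>x. xi_eps W \<epsilon> \<phi> x t * rho_tilde \<eta> y s x t \<partial>lborel)
      + c3 * (\<integral>x. indicator (ball y (1/2)) x * e_eps W \<epsilon> \<phi> x t \<partial>lborel)"
    using i1 i2 i3 by simp
  also have "(\<integral>x. indicator (ball y (1/2)) x * e_eps W \<epsilon> \<phi> x t \<partial>lborel) = (\<integral>x\<in>ball y (1/2). e_eps W \<epsilon> \<phi> x t \<partial>lborel)"
    unfolding set_lebesgue_integral_def by simp
  finally show "(\<integral>x. gg' t x \<partial>lborel) \<le> (1/2) * (\<integral>x. rho_tilde \<eta> y s x t * (norm (u x t))\<^sup>2 * e_eps W \<epsilon> \<phi> x t \<partial>lborel)
      + 1 / (2 * (s - t)) * (\<integral>x. xi_eps W \<epsilon> \<phi> x t * rho_tilde \<eta> y s x t \<partial>lborel)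
      + cc2 * exp (- 1 / (128 * (s - t))) * (\<integral>x\<in>ball y (1/2). e_eps W \<epsilon> \<phi> x t \<partial>lborel)"
    unfolding c3_def .
qed

end


theorem proposition4p3:
  fixes \<eta> :: "real^'n::finite \<Rightarrow> real"
  assumes dim: "CARD('n) \<ge> 2"
    and eta_smooth: "smooth_fun \<eta>"
    and eta_supp: "\<exists>r<1/2. \<forall>x. r \<le> norm x \<longrightarrow> \<eta> x = 0"
    and eta_bounds: "\<forall>x. 0 \<le> \<eta> x \<and> \<eta> x \<le> 1"
    and eta_one: "\<forall>x. norm x < 1/4 \<longrightarrow> \<eta> x = 1"
    and eta_radial: "\<forall>x z. norm x = norm z \<longrightarrow> \<eta> x = \<eta> z"
  shows "\<exists>c2::real. \<forall>(W::real \<Rightarrow> real) (\<epsilon>::real) (T::real)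
            (u::real^'n \<Rightarrow> real \<Rightarrow> real^'n) (\<phi>::real^'n \<Rightarrow> real \<Rightarrow> real).
     ( (\<forall>x. 0 \<le> W x)
       \<and> (\<forall>k<3. \<forall>x. ((deriv ^^ k) W has_real_derivative (deriv ^^ Suc k) W x) (at x))
       \<and> continuous_on UNIV ((deriv ^^ 3) W)
       \<and> W 1 = 0 \<and> W (-1) = 0 \<and> deriv W 1 = 0 \<and> deriv W (-1) = 0
       \<and> 0 < \<epsilon> \<and> \<epsilon> < 1 \<and> 0 < T
       \<and> (\<forall>i. smooth_fun (\<lambda>z::(real^'n) \<times> real. u (fst z) (snd z) $ i))
       \<and> phase_regular T \<phi>
       \<and> ( (zn_periodic \<phi> \<and> zn_periodic u)
           \<or> ((\<exists>R. \<forall>x. \<forall>t\<in>{0..T}. R < norm x \<longrightarrow> u x t = 0) \<and> decays_to_minus_one T \<phi>) )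
       \<and> (\<forall>x. \<forall>t\<in>{0..T}.
            pdt T \<phi> x t + (\<Sum>i\<in>UNIV. u x t $ i * pdx i \<phi> x t)
              = (\<Sum>i\<in>UNIV. pdx i (pdx i \<phi>) x t) - deriv W (\<phi> x t) / \<epsilon>\<^sup>2) )
     \<longrightarrow> (\<forall>(y::real^'n) (s::real) (t::real). 0 < t \<and> t < s \<and> t < T \<longrightarrow>
           (\<exists>D. ((\<lambda>\<tau>. \<integral>x. rho_tilde \<eta> y s x \<tau> * e_eps W \<epsilon> \<phi> x \<tau> \<partial>lborel)
                     has_real_derivative D) (at t)
              \<and> D \<le> (1/2) * (\<integral>x. rho_tilde \<eta> y s x t * (norm (u x t))\<^sup>2 * e_eps W \<epsilon> \<phi> x t \<partial>lborel)
                   + 1 / (2 * (s - t)) * (\<integral>x. xi_eps W \<epsilon> \<phi> x t * rho_tilde \<eta> y s x t \<partial>lborel)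
                   + c2 * exp (- 1 / (128 * (s - t)))
                       * (\<integral>x\<in>ball y (1/2). e_eps W \<epsilon> \<phi> x t \<partial>lborel)))"
proof -
  interpret bump \<eta> using eta_smooth eta_supp eta_bounds eta_one by unfold_locales
  obtain M1 where M1: "M1 \<ge> 0" "\<forall>i z. \<bar>eta1 i z\<bar> \<le> M1" using M1_ex by blast
  obtain M2 where M2: "M2 \<ge> 0" "\<forall>i j z. \<bar>eta2 i j z\<bar> \<le> M2" using M2_ex by blast
  define c2 where "c2 = (2 * (2 * real CARD('n) * (M2 + 1)) + real CARD('n) * M1 + 3 * real CARD('n) * M2) * KB CARD('n)"
  show ?thesis
  proof (rule exI[of _ c2], intro allI impI)
    fix W :: "real \<Rightarrow> real" and \<epsilon> T :: real and u :: "real^'n \<Rightarrow> real \<Rightarrow> real^'n" and \<phi> :: "real^'n \<Rightarrow> real \<Rightarrow> real"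
      and y :: "real^'n" and s t :: real
    assume H: "(\<forall>x. 0 \<le> W x)
       \<and> (\<forall>k<3. \<forall>x. ((deriv ^^ k) W has_real_derivative (deriv ^^ Suc k) W x) (at x))
       \<and> continuous_on UNIV ((deriv ^^ 3) W)
       \<and> W 1 = 0 \<and> W (-1) = 0 \<and> deriv W 1 = 0 \<and> deriv W (-1) = 0
       \<and> 0 < \<epsilon> \<and> \<epsilon> < 1 \<and> 0 < T
       \<and> (\<forall>i. smooth_fun (\<lambda>z::(real^'n) \<times> real. u (fst z) (snd z) $ i))
       \<and> phase_regular T \<phi>
       \<and> ( (zn_periodic \<phi> \<and> zn_periodic u)
           \<or> ((\<exists>R. \<forall>x. \<forall>t\<in>{0..T}. R < norm x \<longrightarrow> u x t = 0) \<and> decays_to_minus_one T \<phi>) )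
       \<and> (\<forall>x. \<forall>t\<in>{0..T}.
            pdt T \<phi> x t + (\<Sum>i\<in>UNIV. u x t $ i * pdx i \<phi> x t)
              = (\<Sum>i\<in>UNIV. pdx i (pdx i \<phi>) x t) - deriv W (\<phi> x t) / \<epsilon>\<^sup>2)"
    assume tt: "0 < t \<and> t < s \<and> t < T"
    have H2: "\<forall>k<3. \<forall>x. ((deriv ^^ k) W has_real_derivative (deriv ^^ Suc k) W x) (at x)" using H[THEN conjunct2, THEN conjunct1] .
    have d0: "\<forall>x. (W has_real_derivative deriv W x) (at x)"
    proof
      fix x
      have "((deriv ^^ 0) W has_real_derivative (deriv ^^ Suc 0) W x) (at x)" by (rule H2[rule_format]) simp
      thus "(W has_real_derivative deriv W x) (at x)" by simp
    qed
    have "isCont (deriv W) x" for x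
    proof -
      have "((deriv ^^ 1) W has_real_derivative (deriv ^^ Suc 1) W x) (at x)" by (rule H2[rule_format]) simp
      moreover have "(deriv ^^ 1) W = deriv W" by simp
      ultimately have "(deriv W has_real_derivative (deriv ^^ Suc 1) W x) (at x)" by metis
      thus ?thesis by (rule DERIV_isCont)
    qed
    hence Wdc: "continuous_on UNIV (deriv W)" by (simp add: continuous_at_imp_continuous_on)
    have uc: "\<forall>i. continuous_on UNIV (\<lambda>z::(real^'n) \<times> real. u (fst z) (snd z) $ i)"
    proof
      fix i
      have "smooth_fun (\<lambda>z::(real^'n) \<times> real. u (fst z) (snd z) $ i)" using H by blast
      thus "continuous_on UNIV (\<lambda>z::(real^'n) \<times> real. u (fst z) (snd z) $ i)"
        unfolding smooth_fun_def by (auto dest: spec[of _ "[]"])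
    qed
    interpret S: setting \<eta> M1 M2 W \<epsilon> T u \<phi> y s t
    proof (unfold_locales)
      show "\<forall>i z. \<bar>eta1 i z\<bar> \<le> M1" by (rule M1(2))
      show "\<forall>i j z. \<bar>eta2 i j z\<bar> \<le> M2" by (rule M2(2))
      show "\<forall>x. 0 \<le> W x" using H by blast
      show "\<forall>x. (W has_real_derivative deriv W x) (at x)" by (rule d0)
      show "continuous_on UNIV (deriv W)" by (rule Wdc)
      show "0 < \<epsilon>" using H by blast
      show "\<forall>i. continuous_on UNIV (\<lambda>z::(real^'n) \<times> real. u (fst z) (snd z) $ i)" by (rule uc)
      show "phase_regular T \<phi>" using H by blast
      show "\<forall>x. \<forall>t\<in>{0..T}. pdt T \<phi> x t + (\<Sum>i\<in>UNIV. u x t $ i * pdx i \<phi> x t)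
              = (\<Sum>i\<in>UNIV. pdx i (pdx i \<phi>) x t) - deriv W (\<phi> x t) / \<epsilon>\<^sup>2" using H by blast
    qed (use tt in auto)
    have "S.cc2 = c2" unfolding S.cc2_def S.K0_def S.MG_def S.nn_def c2_def ..
    thus "\<exists>D. ((\<lambda>\<tau>. \<integral>x. rho_tilde \<eta> y s x \<tau> * e_eps W \<epsilon> \<phi> x \<tau> \<partial>lborel) has_real_derivative D) (at t)
              \<and> D \<le> (1/2) * (\<integral>x. rho_tilde \<eta> y s x t * (norm (u x t))\<^sup>2 * e_eps W \<epsilon> \<phi> x t \<partial>lborel)
                   + 1 / (2 * (s - t)) * (\<integral>x. xi_eps W \<epsilon> \<phi> x t * rho_tilde \<eta> y s x t \<partial>lborel)
                   + c2 * exp (- 1 / (128 * (s - t)))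
                       * (\<integral>x\<in>ball y (1/2). e_eps W \<epsilon> \<phi> x t \<partial>lborel)"
      using S.final_loc by simp
  qed
qed


end
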